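(* Each $f_i$ ($1\le i\le d$) lies in $\mathbb R(\mathbb R^d\oplus\mathfrak{so}(d,\mathbb R))^{O_d(\mathbb R)}$. In particular $U_d(\mathbb R)=U_d(\mathbb C)\cap(\mathbb R^d\oplus\mathfrak{so}(d,\mathbb R))$ is a well-defined, $O_d(\mathbb R)$-invariant, non-empty Zariski-open subset of $\mathbb R^d\oplus\mathfrak{so}(d,\mathbb R)$, and $L^{(d-1)}\cap(\mathbb R^d\oplus\mathfrak{so}(d,\mathbb R))$ intersects each $O_d(\mathbb R)$-orbit contained in $U_d(\mathbb R)$.
   Context: Fix $d\ge2$. $V=\mathbb C^d\oplus\mathfrak{so}(d,\mathbb C)$, elements $(v,M)$ with $v=(c_1,\dots,c_d)^\top$, $M$ skew-symmetric, $M_{ij}=c_{ij}=-M_{ji}$ for $i<j$; $\mathbb R^d\oplus\mathfrak{so}(d,\mathbb R)$ is its real points. $O_d(\mathbb K)=\{A\in\mathbb K^{d\times d}:AA^\top=I\}$ acts by $A\cdot(v,M)=(Av,AMA^\top)$. $L^{(1)}=\{c_1=\dots=c_{d-1}=0\}$, $L^{(i)}=\{(v,M)\in L^{(i-1)}:c_{k(d-i+2)}=0,\ 1\le k\le d-i\}$ for $2\le i\le d-1$. $f_1=\sum c_i^2$; for $2\le i\le d-1$, $f_i$ is the $O_d(\mathbb C)$-invariant rational function on $V$ with $f_i|_{L^{(i-1)}}=c_{1(d-i+2)}^2+\dots+c_{(d-i+1)(d-i+2)}^2$; $f_d$ is the invariant rational function with $f_d|_{L^{(d-1)}}=c_{12}^2$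 (these exist and are uniquely determined). $U_d(\mathbb C)$ is the set of points of $V$ in the domain of all $f_k$ with $\prod_kf_k\neq0$. $\mathbb R(X)^G$ denotes the field of $G$-invariant rational functions with real coefficients. *)

theory Defs
  imports Complex_Main
begin

text \<open>Points of V = C^d (+) so(d,C): a pair (v, M) with v i = c_i (1 <= i <= d)
  and M i j = c_ij, M skew-symmetric, everything outside the index range {1..d} zero.\<close>
type_synonym pt = "(nat \<Rightarrow> complex) \<times> (nat \<Rightarrow> nat \<Rightarrow> complex)"

definition Vsp :: "nat \<Rightarrow> pt set" where
  "Vsp d = {(v, M). (\<forall>i. i \<notin> {1..d} \<longrightarrow> v i = 0)
                  \<and> (\<forall>i j. i \<notin> {1..d} \<or> j \<notin> {1..d} \<longrightarrow> M i j = 0)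
                  \<and> (\<forall>i j. M j i = - M i j)}"

definition VR :: "nat \<Rightarrow> pt set" where
  "VR d = {(v, M) \<in> Vsp d. (\<forall>i. v i \<in> \<real>) \<and> (\<forall>i j. M i j \<in> \<real>)}"

text \<open>O_d(K) for K = C (UNIV) or K = R (Reals), as d x d matrices indexed by {1..d}.\<close>
definition Orth :: "nat \<Rightarrow> complex set \<Rightarrow> (nat \<Rightarrow> nat \<Rightarrow> complex) set" where
  "Orth d K = {A. (\<forall>i j. A i j \<in> K)
                \<and> (\<forall>i j. i \<notin> {1..d} \<or> j \<notin> {1..d} \<longrightarrow> A i j = 0)
                \<and> (\<forall>i\<in>{1..d}. \<forall>k\<in>{1..d}.
                      (\<Sum>j=1..d. A i j * A k j) = (if i = k then 1 else 0))}"

definition act :: "nat \<Rightarrow> (nat \<Rightarrow> nat \<Rightarrow> complex) \<Rightarrow> pt \<Rightarrow> pt" where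
  "act d A x = (case x of (v, M) \<Rightarrow>
      (\<lambda>i. \<Sum>j=1..d. A i j * v j,
       \<lambda>i k. \<Sum>j=1..d. \<Sum>l=1..d. A i j * M j l * A k l))"

inductive poly_fun :: "nat \<Rightarrow> complex set \<Rightarrow> (pt \<Rightarrow> complex) \<Rightarrow> bool"
  for d :: nat and K :: "complex set" where
  const: "c \<in> K \<Longrightarrow> poly_fun d K (\<lambda>x. c)"
| coord_v: "1 \<le> i \<Longrightarrow> i \<le> d \<Longrightarrow> poly_fun d K (\<lambda>x. fst x i)"
| coord_M: "1 \<le> i \<Longrightarrow> i < j \<Longrightarrow> j \<le> d \<Longrightarrow> poly_fun d K (\<lambda>x. snd x i j)"
| add: "poly_fun d K p \<Longrightarrow> poly_fun d K q \<Longrightarrow> poly_fun d K (\<lambda>x. p x + q x)"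
| mult: "poly_fun d K p \<Longrightarrow> poly_fun d K q \<Longrightarrow> poly_fun d K (\<lambda>x. p x * q x)"

text \<open>The rational function P/Q on V, as a partial function: defined exactly on its
  domain of definition (points where some representative P'/Q' of the same element
  of C(V) has Q' nonzero), with its value there.\<close>
definition ratfun_of :: "nat \<Rightarrow> (pt \<Rightarrow> complex) \<Rightarrow> (pt \<Rightarrow> complex) \<Rightarrow> pt \<Rightarrow> complex option" where
  "ratfun_of d P Q x =
    (if x \<in> Vsp d \<and> (\<exists>P' Q'. poly_fun d UNIV P' \<and> poly_fun d UNIV Q'
            \<and> (\<forall>y\<in>Vsp d. P y * Q' y = P' y * Q y) \<and> Q' x \<noteq> 0)
     then Some (THE c. \<exists>P' Q'. poly_fun d UNIV P' \<and> poly_fun d UNIV Q'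
            \<and> (\<forall>y\<in>Vsp d. P y * Q' y = P' y * Q y) \<and> Q' x \<noteq> 0 \<and> c = P' x / Q' x)
     else None)"

definition is_ratfun :: "nat \<Rightarrow> complex set \<Rightarrow> (pt \<Rightarrow> complex option) \<Rightarrow> bool" where
  "is_ratfun d K g = (\<exists>P Q. poly_fun d K P \<and> poly_fun d K Q \<and> (\<exists>x\<in>Vsp d. Q x \<noteq> 0)
                         \<and> g = ratfun_of d P Q)"

definition invariant :: "nat \<Rightarrow> complex set \<Rightarrow> (pt \<Rightarrow> complex option) \<Rightarrow> bool" where
  "invariant d K g = (\<forall>A\<in>Orth d K. \<forall>x\<in>Vsp d. g (act d A x) = g x)"

fun Lset :: "nat \<Rightarrow> nat \<Rightarrow> pt set" where
  "Lset d 0 = Vsp d"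
| "Lset d (Suc 0) = {x \<in> Vsp d. \<forall>i\<in>{1..d-1}. fst x i = 0}"
| "Lset d (Suc (Suc n)) =
     {x \<in> Lset d (Suc n). \<forall>k\<in>{1..d - (n+2)}. snd x k (d - (n+2) + 2) = 0}"

definition hfun :: "nat \<Rightarrow> nat \<Rightarrow> pt \<Rightarrow> complex" where
  "hfun d i x = (if i = 1 then (\<Sum>j=1..d. (fst x j)^2)
                 else (\<Sum>k=1..d-i+1. (snd x k (d-i+2))^2))"

definition finv :: "nat \<Rightarrow> nat \<Rightarrow> pt \<Rightarrow> complex option" where
  "finv d i = (if i = 1 then ratfun_of d (hfun d 1) (\<lambda>_. 1)
     else (THE g. is_ratfun d UNIV g \<and> invariant d UNIV g
            \<and> (\<exists>x\<in>Lset d (i-1). g x \<noteq> None)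
            \<and> (\<forall>x\<in>Lset d (i-1). g x \<noteq> None \<longrightarrow> g x = Some (hfun d i x))))"

definition U_C :: "nat \<Rightarrow> pt set" where
  "U_C d = {x \<in> Vsp d. (\<forall>k\<in>{1..d}. finv d k x \<noteq> None)
                     \<and> (\<Prod>k=1..d. the (finv d k x)) \<noteq> 0}"

definition U_R :: "nat \<Rightarrow> pt set" where
  "U_R d = U_C d \<inter> VR d"

definition zariski_open_R :: "nat \<Rightarrow> pt set \<Rightarrow> bool" where
  "zariski_open_R d U = (U \<subseteq> VR d \<and> (\<exists>S. (\<forall>p\<in>S. poly_fun d \<real> p)
                          \<and> VR d - U = {x \<in> VR d. \<forall>p\<in>S. p x = 0}))"

end

theory Submission imports Defs "Jordan_Normal_Form.Determinant" "HOL-Computational_Algebra.Polynomial" begin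

lemma pf_mono: "poly_fun d K p \<Longrightarrow> K \<subseteq> K' \<Longrightarrow> poly_fun d K' p"
  by (induction rule: poly_fun.induct) (auto intro: poly_fun.intros)

lemma pf_sum:
  assumes "0 \<in> K" "finite F" "\<And>a. a \<in> F \<Longrightarrow> poly_fun d K (f a)"
  shows "poly_fun d K (\<lambda>x. \<Sum>a\<in>F. f a x)"
  using assms(2,3)
proof (induction F rule: finite_induct)
  case empty then show ?case using assms(1) by (simp add: poly_fun.const)
next
  case (insert a F) then show ?case by (simp add: poly_fun.add)
qed

lemma pf_prod:
  assumes "1 \<in> K" "finite F" "\<And>a. a \<in> F \<Longrightarrow> poly_fun d K (f a)"
  shows "poly_fun d K (\<lambda>x. \<Prod>a\<in>F. f a x)"
  using assms(2,3)
proof (induction F rule: finite_induct)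
  case empty then show ?case using assms(1) by (simp add: poly_fun.const)
next
  case (insert a F) then show ?case by (simp add: poly_fun.mult)
qed

lemma pf_neg: assumes "-1 \<in> K" "poly_fun d K p" shows "poly_fun d K (\<lambda>x. - p x)"
proof -
  have "poly_fun d K (\<lambda>x. (-1) * p x)" by (rule poly_fun.mult[OF poly_fun.const[OF assms(1)] assms(2)])
  then show ?thesis by simp
qed

lemma pf_diff: assumes "-1 \<in> K" "poly_fun d K p" "poly_fun d K q" shows "poly_fun d K (\<lambda>x. p x - q x)"
proof -
  have "poly_fun d K (\<lambda>x. p x + - q x)" by (rule poly_fun.add[OF assms(2) pf_neg[OF assms(1,3)]])
  then show ?thesis by simp
qed

lemma pf_pow: "1 \<in> K \<Longrightarrow> poly_fun d K p \<Longrightarrow> poly_fun d K (\<lambda>x. p x ^ n)"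
  by (induction n) (auto intro: poly_fun.intros)

lemma Vsp_char: "x \<in> Vsp d \<longleftrightarrow> (\<forall>i. i \<notin> {1..d} \<longrightarrow> fst x i = 0)
                  \<and> (\<forall>i j. i \<notin> {1..d} \<or> j \<notin> {1..d} \<longrightarrow> snd x i j = 0)
                  \<and> (\<forall>i j. snd x j i = - snd x i j)"
  by (cases x) (simp only: Vsp_def mem_Collect_eq case_prod_conv fst_conv snd_conv)

definition Mget :: "pt \<Rightarrow> nat \<Rightarrow> nat \<Rightarrow> complex" where
  "Mget x a b = (if a < b then snd x a b else if b < a then - snd x b a else 0)"

lemma Mget_skew: "Mget x b a = - Mget x a b"
  unfolding Mget_def by auto

lemma Mget_Vsp: "x \<in> Vsp d \<Longrightarrow> Mget x a b = snd x a b"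
proof -
  assume "x \<in> Vsp d"
  then have sk: "\<And>i j. snd x j i = - snd x i j" unfolding Vsp_char by blast
  have "snd x a a = 0" using sk[of a a] by simp
  then show ?thesis unfolding Mget_def using sk[of a b] by auto
qed

lemma pf_Mget: "-1 \<in> K \<Longrightarrow> 0 \<in> K \<Longrightarrow> a \<in> {1..d} \<Longrightarrow> b \<in> {1..d} \<Longrightarrow> poly_fun d K (\<lambda>x. Mget x a b)"
proof -
  assume as: "-1 \<in> K" "0 \<in> K" "a \<in> {1..d}" "b \<in> {1..d}"
  show ?thesis
  proof (cases "a < b")
    case True then show ?thesis unfolding Mget_def using as by (auto intro: poly_fun.intros)
  next
    case False
    show ?thesis
    proof (cases "b < a")
      case True
      have "poly_fun d K (\<lambda>x. - snd x b a)" using as True by (auto intro!: pf_neg poly_fun.coord_M)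
      then show ?thesis unfolding Mget_def using True False by simp
    next
      case False2: False
      then show ?thesis unfolding Mget_def using False as by (auto intro: poly_fun.intros)
    qed
  qed
qed

section \<open>Lines and the integral domain property\<close>

definition lin :: "pt \<Rightarrow> pt \<Rightarrow> complex \<Rightarrow> pt" where
  "lin x y t = (\<lambda>i. fst x i + t * (fst y i - fst x i), \<lambda>i j. snd x i j + t * (snd y i j - snd x i j))"

lemma lin_0: "lin x y 0 = x" unfolding lin_def by simp
lemma lin_1: "lin x y 1 = y" unfolding lin_def by simp

lemma pf_line: "poly_fun d K p \<Longrightarrow> \<exists>P. \<forall>t. p (lin x y t) = poly P t"
proof (induction rule: poly_fun.induct)
  case (const c) then show ?case by (intro exI[of _ "[:c:]"]) simp
next
  case (coord_v i) then show ?case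
    by (intro exI[of _ "[:fst x i, fst y i - fst x i:]"]) (simp add: lin_def algebra_simps)
next
  case (coord_M i j) then show ?case
    by (intro exI[of _ "[:snd x i j, snd y i j - snd x i j:]"]) (simp add: lin_def algebra_simps)
next
  case (add p q) then obtain P Q where "\<forall>t. p (lin x y t) = poly P t" "\<forall>t. q (lin x y t) = poly Q t" by blast
  then show ?case by (intro exI[of _ "P + Q"]) simp
next
  case (mult p q) then obtain P Q where "\<forall>t. p (lin x y t) = poly P t" "\<forall>t. q (lin x y t) = poly Q t" by blast
  then show ?case by (intro exI[of _ "P * Q"]) simp
qed

definition line_closed :: "pt set \<Rightarrow> bool" where
  "line_closed S = (\<forall>x\<in>S. \<forall>y\<in>S. \<forall>t. lin x y t \<in> S)"

lemma integral_dom: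
  assumes S: "line_closed S" and p: "poly_fun d K p" and q: "poly_fun d K' q"
    and pq: "\<And>y. y \<in> S \<Longrightarrow> p y * q y = 0" and y0: "y0 \<in> S" "q y0 \<noteq> 0" and y: "y \<in> S"
  shows "p y = 0"
proof -
  obtain P where P: "\<forall>t. p (lin y y0 t) = poly P t" using pf_line[OF p] by blast
  obtain Q where Q: "\<forall>t. q (lin y y0 t) = poly Q t" using pf_line[OF q] by blast
  have "\<forall>t. poly (P * Q) t = 0" using P Q pq S y y0 unfolding line_closed_def by (metis poly_mult)
  then have "P * Q = 0" using poly_all_0_iff_0 by blast
  moreover have "Q \<noteq> 0" using Q y0 lin_1 by (metis poly_0)
  ultimately have "P = 0" by simp
  then show ?thesis using P lin_0 by (metis poly_0)
qed

lemma Vsp_line_closed: "line_closed (Vsp d)"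
  unfolding line_closed_def
proof (intro ballI allI)
  fix x y t assume x: "x \<in> Vsp d" and y: "y \<in> Vsp d"
  have xa: "\<forall>i. i \<notin> {1..d} \<longrightarrow> fst x i = 0" "\<forall>i j. i \<notin> {1..d} \<or> j \<notin> {1..d} \<longrightarrow> snd x i j = 0"
    using x unfolding Vsp_char by blast+
  have ya: "\<forall>i. i \<notin> {1..d} \<longrightarrow> fst y i = 0" "\<forall>i j. i \<notin> {1..d} \<or> j \<notin> {1..d} \<longrightarrow> snd y i j = 0"
    using y unfolding Vsp_char by blast+
  have a: "\<forall>i. i \<notin> {1..d} \<longrightarrow> fst (lin x y t) i = 0" using xa ya unfolding lin_def by simp
  have b: "\<forall>i j. i \<notin> {1..d} \<or> j \<notin> {1..d} \<longrightarrow> snd (lin x y t) i j = 0"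
    using xa ya unfolding lin_def by simp
  have c: "\<forall>i j. snd (lin x y t) j i = - snd (lin x y t) i j"
  proof (intro allI)
    fix i j
    have "snd x j i = - snd x i j" "snd y j i = - snd y i j" using x y unfolding Vsp_char by blast+
    then show "snd (lin x y t) j i = - snd (lin x y t) i j" unfolding lin_def snd_conv
      by (simp add: algebra_simps)
  qed
  show "lin x y t \<in> Vsp d" unfolding Vsp_char using a b c by blast
qed

section \<open>Rational functions\<close>

lemma cross_unique:
  assumes "poly_fun d UNIV Q" "poly_fun d UNIV P1" "poly_fun d UNIV Q1"
    "poly_fun d UNIV P2" "poly_fun d UNIV Q2"
    "y0 \<in> Vsp d" "Q y0 \<noteq> 0"
    "\<forall>y\<in>Vsp d. P y * Q1 y = P1 y * Q y" "\<forall>y\<in>Vsp d. P y * Q2 y = P2 y * Q y"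
    "x \<in> Vsp d"
  shows "P1 x * Q2 x = P2 x * Q1 x"
proof -
  have pf: "poly_fun d UNIV (\<lambda>y. P1 y * Q2 y - P2 y * Q1 y)"
    using assms by (auto intro!: pf_diff poly_fun.mult)
  have "(P1 x * Q2 x - P2 x * Q1 x) = 0"
  proof (rule integral_dom[OF Vsp_line_closed pf assms(1) _ assms(6,7,10)])
    fix y assume y: "y \<in> Vsp d"
    have "(P1 y * Q2 y - P2 y * Q1 y) * Q y = (P1 y * Q y) * Q2 y - (P2 y * Q y) * Q1 y"
      by (simp add: algebra_simps)
    also have "\<dots> = 0" using assms(8,9) y by (metis mult.commute mult.left_commute right_minus_eq)
    finally show "(P1 y * Q2 y - P2 y * Q1 y) * Q y = 0" .
  qed
  then show ?thesis by simp
qed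

lemma ratfun_some:
  assumes "poly_fun d UNIV Q" "y0 \<in> Vsp d" "Q y0 \<noteq> 0"
    "poly_fun d UNIV P1" "poly_fun d UNIV Q1" "\<forall>y\<in>Vsp d. P y * Q1 y = P1 y * Q y"
    "x \<in> Vsp d" "Q1 x \<noteq> 0"
  shows "ratfun_of d P Q x = Some (P1 x / Q1 x)"
proof -
  have ex: "\<exists>P' Q'. poly_fun d UNIV P' \<and> poly_fun d UNIV Q'
            \<and> (\<forall>y\<in>Vsp d. P y * Q' y = P' y * Q y) \<and> Q' x \<noteq> 0" using assms by blast
  have "(THE c. \<exists>P' Q'. poly_fun d UNIV P' \<and> poly_fun d UNIV Q'
            \<and> (\<forall>y\<in>Vsp d. P y * Q' y = P' y * Q y) \<and> Q' x \<noteq> 0 \<and> c = P' x / Q' x) = P1 x / Q1 x"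
  proof (rule the_equality)
    show "\<exists>P' Q'. poly_fun d UNIV P' \<and> poly_fun d UNIV Q'
            \<and> (\<forall>y\<in>Vsp d. P y * Q' y = P' y * Q y) \<and> Q' x \<noteq> 0 \<and> P1 x / Q1 x = P' x / Q' x"
      using assms by blast
  next
    fix c assume "\<exists>P' Q'. poly_fun d UNIV P' \<and> poly_fun d UNIV Q'
            \<and> (\<forall>y\<in>Vsp d. P y * Q' y = P' y * Q y) \<and> Q' x \<noteq> 0 \<and> c = P' x / Q' x"
    then obtain P2 Q2 where "poly_fun d UNIV P2" "poly_fun d UNIV Q2"
      "\<forall>y\<in>Vsp d. P y * Q2 y = P2 y * Q y" "Q2 x \<noteq> 0" "c = P2 x / Q2 x" by blast
    moreover have "P1 x * Q2 x = P2 x * Q1 x"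
      using cross_unique[OF assms(1,4,5) \<open>poly_fun d UNIV P2\<close> \<open>poly_fun d UNIV Q2\<close> assms(2,3,6)]
        calculation assms(7) by blast
    ultimately have "c * Q2 x = P2 x" by simp
    then have "c * Q1 x * Q2 x = P1 x * Q2 x" using \<open>P1 x * Q2 x = P2 x * Q1 x\<close>
      by (metis mult.commute mult.left_commute)
    then have "c * Q1 x = P1 x" using \<open>Q2 x \<noteq> 0\<close> by simp
    then show "c = P1 x / Q1 x" using assms(8) by (simp add: field_simps)
  qed
  then show ?thesis unfolding ratfun_of_def using ex assms(7) by simp
qed

lemma ratfun_dom:
  assumes "ratfun_of d P Q x \<noteq> None"
  shows "x \<in> Vsp d \<and> (\<exists>P' Q'. poly_fun d UNIV P' \<and> poly_fun d UNIV Q'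
            \<and> (\<forall>y\<in>Vsp d. P y * Q' y = P' y * Q y) \<and> Q' x \<noteq> 0)"
  using assms unfolding ratfun_of_def by (auto split: if_splits)

lemma ratfun_direct:
  assumes "poly_fun d UNIV P" "poly_fun d UNIV Q" "x \<in> Vsp d" "Q x \<noteq> 0"
  shows "ratfun_of d P Q x = Some (P x / Q x)"
  by (rule ratfun_some[OF assms(2,3,4,1,2) _ assms(3,4)]) simp

lemma ratfun_cong_half:
  assumes "poly_fun d UNIV P" "poly_fun d UNIV Q" "poly_fun d UNIV P2" "poly_fun d UNIV Q2"
    "y0 \<in> Vsp d" "Q y0 \<noteq> 0" "y2 \<in> Vsp d" "Q2 y2 \<noteq> 0"
    "\<forall>y\<in>Vsp d. P y * Q2 y = P2 y * Q y" "ratfun_of d P Q x \<noteq> None"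
  shows "ratfun_of d P2 Q2 x = ratfun_of d P Q x"
proof -
  obtain P1 Q1 where x: "x \<in> Vsp d" and r: "poly_fun d UNIV P1" "poly_fun d UNIV Q1"
            "\<forall>y\<in>Vsp d. P y * Q1 y = P1 y * Q y" "Q1 x \<noteq> 0"
    using ratfun_dom[OF assms(10)] by blast
  have 1: "ratfun_of d P Q x = Some (P1 x / Q1 x)"
    by (rule ratfun_some[OF assms(2,5,6) r(1,2,3) x r(4)])
  have pf: "poly_fun d UNIV (\<lambda>y. P2 y * Q1 y - P1 y * Q2 y)"
    using assms r by (auto intro!: pf_diff poly_fun.mult)
  have "\<forall>y\<in>Vsp d. P2 y * Q1 y = P1 y * Q2 y"
  proof
    fix y assume y: "y \<in> Vsp d"
    have "P2 y * Q1 y - P1 y * Q2 y = 0"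
    proof (rule integral_dom[OF Vsp_line_closed pf assms(2) _ assms(5,6) y])
      fix z assume z: "z \<in> Vsp d"
      have "(P2 z * Q1 z - P1 z * Q2 z) * Q z = Q1 z * (P2 z * Q z) - Q2 z * (P1 z * Q z)"
        by (simp add: algebra_simps)
      also have "\<dots> = Q1 z * (P z * Q2 z) - Q2 z * (P z * Q1 z)" using assms(9) r(3) z by simp
      also have "\<dots> = 0" by (simp add: algebra_simps)
      finally show "(P2 z * Q1 z - P1 z * Q2 z) * Q z = 0" .
    qed
    then show "P2 y * Q1 y = P1 y * Q2 y" by simp
  qed
  then have "ratfun_of d P2 Q2 x = Some (P1 x / Q1 x)"
    by (intro ratfun_some[OF assms(4,7,8) r(1,2) _ x r(4)])
  then show ?thesis using 1 by simp
qed

lemma ratfun_cong: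
  assumes "poly_fun d UNIV P" "poly_fun d UNIV Q" "poly_fun d UNIV P2" "poly_fun d UNIV Q2"
    "y0 \<in> Vsp d" "Q y0 \<noteq> 0" "y2 \<in> Vsp d" "Q2 y2 \<noteq> 0"
    "\<forall>y\<in>Vsp d. P y * Q2 y = P2 y * Q y"
  shows "ratfun_of d P2 Q2 = ratfun_of d P Q"
proof
  fix x
  have sym: "\<forall>y\<in>Vsp d. P2 y * Q y = P y * Q2 y" using assms(9) by (metis mult.commute)
  show "ratfun_of d P2 Q2 x = ratfun_of d P Q x"
  proof (cases "ratfun_of d P Q x = None")
    case True
    show ?thesis
    proof (cases "ratfun_of d P2 Q2 x = None")
      case True then show ?thesis using \<open>ratfun_of d P Q x = None\<close> by simp
    next
      case False
      show ?thesis using ratfun_cong_half[OF assms(3,4,1,2,7,8,5,6) sym False] by simp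
    qed
  next
    case False
    then show ?thesis using ratfun_cong_half[OF assms] by simp
  qed
qed

section \<open>Orthogonal matrices\<close>

lemma sum_shift1: "(\<Sum>j\<in>{0..<d}. f (Suc j)) = (\<Sum>j=1..d. (f j :: 'a::comm_monoid_add))"
proof -
  have "{Suc 0..<Suc d} = {1..d}" by auto
  then show ?thesis using sum.shift_bounds_Suc_ivl[of f 0 d] by simp
qed

lemma Orth_col:
  assumes A: "A \<in> Orth d K" and i: "i \<in> {1..d}" and k: "k \<in> {1..d}"
  shows "(\<Sum>j=1..d. A j i * A j k) = (if i = k then 1 else 0)"
proof -
  define B where "B = mat d d (\<lambda>(i,j). A (Suc i) (Suc j))"
  have Bc: "B \<in> carrier_mat d d" unfolding B_def by simp
  have Bt: "transpose_mat B \<in> carrier_mat d d" using Bc by simp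
  have "B * transpose_mat B = 1\<^sub>m d"
  proof (rule eq_matI)
    fix a b assume ab: "a < dim_row (1\<^sub>m d :: complex mat)" "b < dim_col (1\<^sub>m d :: complex mat)"
    then have ab': "a < d" "b < d" by auto
    have "(B * transpose_mat B) $$ (a, b) = (\<Sum>j\<in>{0..<d}. A (Suc a) (Suc j) * A (Suc b) (Suc j))"
      using ab' Bc unfolding B_def by (simp add: scalar_prod_def)
    also have "\<dots> = (\<Sum>j=1..d. A (Suc a) j * A (Suc b) j)"
      by (rule sum_shift1[of "\<lambda>j. A (Suc a) j * A (Suc b) j"])
    also have "\<dots> = (if Suc a = Suc b then 1 else 0)" using A ab' unfolding Orth_def by auto
    finally show "(B * transpose_mat B) $$ (a, b) = 1\<^sub>m d $$ (a, b)" using ab' by simp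
  qed (use Bc in auto)
  then have BB: "transpose_mat B * B = 1\<^sub>m d" using mat_mult_left_right_inverse[OF Bc Bt] by simp
  obtain a where a: "i = Suc a" "a < d" using i by (cases i) auto
  obtain b where b: "k = Suc b" "b < d" using k by (cases k) auto
  have "(transpose_mat B * B) $$ (a, b) = (\<Sum>j\<in>{0..<d}. A (Suc j) (Suc a) * A (Suc j) (Suc b))"
    using a b Bc unfolding B_def by (simp add: scalar_prod_def)
  also have "\<dots> = (\<Sum>j=1..d. A j (Suc a) * A j (Suc b))"
    by (rule sum_shift1[of "\<lambda>j. A j (Suc a) * A j (Suc b)"])
  finally show ?thesis using BB a b by simp
qed

lemma Orth_T: assumes "A \<in> Orth d K" shows "(\<lambda>i j. A j i) \<in> Orth d K"
  using assms Orth_col[OF assms] unfolding Orth_def by auto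

lemma Orth_mono: "A \<in> Orth d K \<Longrightarrow> K \<subseteq> K' \<Longrightarrow> A \<in> Orth d K'"
  unfolding Orth_def by blast

lemma Orth_zero: "A \<in> Orth d K \<Longrightarrow> i \<notin> {1..d} \<or> j \<notin> {1..d} \<Longrightarrow> A i j = 0"
  unfolding Orth_def by blast

lemma delta_sum: "i \<in> {1..(d::nat)} \<Longrightarrow> (\<Sum>p=1..d. (if i = p then 1 else 0) * f p) = (f i :: complex)"
proof -
  assume i: "i \<in> {1..d}"
  have "(\<Sum>p=1..d. (if i = p then 1 else 0) * f p) = (\<Sum>p=1..d. if p = i then f p else 0)"
    by (rule sum.cong) auto
  also have "\<dots> = (if i \<in> {1..d} then f i else 0)" by (rule sum.delta) simp
  also have "\<dots> = f i" using i by simp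
  finally show ?thesis .
qed

lemma col_contract:
  assumes A: "A \<in> Orth d K" and i: "i \<in> {1..d}"
  shows "(\<Sum>p=1..d. (\<Sum>j=1..d. A j i * A j p) * f p) = f i"
proof -
  have "(\<Sum>p=1..d. (\<Sum>j=1..d. A j i * A j p) * f p) = (\<Sum>p=1..d. (if i = p then 1 else 0) * f p)"
    by (rule sum.cong) (use Orth_col[OF A i] in auto)
  also have "\<dots> = f i" using delta_sum[OF i] .
  finally show ?thesis .
qed

lemma act_Vsp: assumes A: "A \<in> Orth d K" and x: "x \<in> Vsp d" shows "act d A x \<in> Vsp d"
proof -
  obtain v M where xv: "x = (v, M)" by (cases x)
  have sk: "\<And>i j. M j i = - M i j" using x xv unfolding Vsp_def by blast
  have z: "\<And>i j. i \<notin> {1..d} \<or> j \<notin> {1..d} \<Longrightarrow> A i j = 0" using Orth_zero[OF A] by blast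
  have 1: "\<forall>i. i \<notin> {1..d} \<longrightarrow> (\<Sum>j=1..d. A i j * v j) = 0" using z by simp
  have 2: "\<forall>i k. i \<notin> {1..d} \<or> k \<notin> {1..d} \<longrightarrow> (\<Sum>j=1..d. \<Sum>l=1..d. A i j * M j l * A k l) = 0"
  proof (intro allI impI)
    fix i k assume "i \<notin> {1..d} \<or> k \<notin> {1..d}"
    then have h: "\<And>j l. A i j * M j l * A k l = 0" using z by (metis mult_zero_left mult_zero_right)
    show "(\<Sum>j=1..d. \<Sum>l=1..d. A i j * M j l * A k l) = 0" by (simp only: h sum.neutral_const)
  qed
  have 3: "\<forall>i k. (\<Sum>j=1..d. \<Sum>l=1..d. A k j * M j l * A i l) = - (\<Sum>j=1..d. \<Sum>l=1..d. A i j * M j l * A k l)"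
  proof (intro allI)
    fix i k
    have "(\<Sum>j=1..d. \<Sum>l=1..d. A k j * M j l * A i l) = (\<Sum>l=1..d. \<Sum>j=1..d. A k j * M j l * A i l)"
      by (rule sum.swap)
    also have "\<dots> = (\<Sum>l=1..d. \<Sum>j=1..d. - (A i l * M l j * A k j))"
    proof (intro sum.cong refl)
      fix l j show "A k j * M j l * A i l = - (A i l * M l j * A k j)" using sk[of l j] by simp
    qed
    also have "\<dots> = - (\<Sum>j=1..d. \<Sum>l=1..d. A i j * M j l * A k l)" by (simp add: sum_negf)
    finally show "(\<Sum>j=1..d. \<Sum>l=1..d. A k j * M j l * A i l) = - (\<Sum>j=1..d. \<Sum>l=1..d. A i j * M j l * A k l)" .
  qed
  have e: "act d A x = (\<lambda>i. \<Sum>j=1..d. A i j * v j, \<lambda>i k. \<Sum>j=1..d. \<Sum>l=1..d. A i j * M j l * A k l)"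
    by (simp add: act_def xv)
  show ?thesis unfolding e Vsp_def mem_Collect_eq case_prod_conv using 1 2 3 by blast
qed

lemma VR_char: "x \<in> VR d \<longleftrightarrow> x \<in> Vsp d \<and> (\<forall>i. fst x i \<in> \<real>) \<and> (\<forall>i j. snd x i j \<in> \<real>)"
  by (cases x) (simp add: VR_def)

lemma act_VR: assumes A: "A \<in> Orth d \<real>" and x: "x \<in> VR d" shows "act d A x \<in> VR d"
proof -
  have 1: "act d A x \<in> Vsp d" using act_Vsp[OF A] x unfolding VR_char by blast
  obtain v M where xv: "x = (v, M)" by (cases x)
  have Ar: "\<And>i j. A i j \<in> \<real>" using A unfolding Orth_def by blast
  have vr: "\<And>i. v i \<in> \<real>" and Mr: "\<And>i j. M i j \<in> \<real>" using x xv unfolding VR_char by auto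
  have e: "act d A x = (\<lambda>i. \<Sum>j=1..d. A i j * v j, \<lambda>i k. \<Sum>j=1..d. \<Sum>l=1..d. A i j * M j l * A k l)"
    unfolding act_def xv by (simp only: prod.case)
  have 2: "\<forall>i. fst (act d A x) i \<in> \<real>"
    unfolding e fst_conv by (intro allI sum_in_Reals Reals_mult Ar vr)
  have 3: "\<forall>i k. snd (act d A x) i k \<in> \<real>"
    unfolding e snd_conv by (intro allI sum_in_Reals Reals_mult Ar Mr)
  show ?thesis unfolding VR_char using 1 2 3 by blast
qed

lemma contract_right:
  assumes A: "A \<in> Orth d K" and k: "k \<in> {1..d}"
  shows "(\<Sum>l=1..d. (\<Sum>q=1..d. f q * A l q) * A l k) = f k"
proof -
  have "(\<Sum>l=1..d. (\<Sum>q=1..d. f q * A l q) * A l k) = (\<Sum>l=1..d. \<Sum>q=1..d. f q * A l q * A l k)"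
    by (simp add: sum_distrib_right)
  also have "\<dots> = (\<Sum>q=1..d. \<Sum>l=1..d. f q * A l q * A l k)" by (rule sum.swap)
  also have "\<dots> = (\<Sum>q=1..d. (\<Sum>l=1..d. A l k * A l q) * f q)"
  proof (intro sum.cong refl)
    fix q show "(\<Sum>l=1..d. f q * A l q * A l k) = (\<Sum>l=1..d. A l k * A l q) * f q"
      unfolding sum_distrib_right by (intro sum.cong refl) (simp add: mult_ac)
  qed
  also have "\<dots> = f k" by (rule col_contract[OF A k])
  finally show ?thesis .
qed

lemma contract_left:
  assumes A: "A \<in> Orth d K" and i: "i \<in> {1..d}"
  shows "(\<Sum>j=1..d. A j i * (\<Sum>p=1..d. A j p * f p)) = f i"
proof -
  have "(\<Sum>j=1..d. A j i * (\<Sum>p=1..d. A j p * f p)) = (\<Sum>j=1..d. \<Sum>p=1..d. A j i * A j p * f p)"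
    by (simp add: sum_distrib_left mult.assoc)
  also have "\<dots> = (\<Sum>p=1..d. \<Sum>j=1..d. A j i * A j p * f p)" by (rule sum.swap)
  also have "\<dots> = (\<Sum>p=1..d. (\<Sum>j=1..d. A j i * A j p) * f p)"
    by (simp add: sum_distrib_right)
  also have "\<dots> = f i" by (rule col_contract[OF A i])
  finally show ?thesis .
qed

lemma act_inv:
  assumes A: "A \<in> Orth d K" and x: "x \<in> Vsp d"
  shows "act d (\<lambda>i j. A j i) (act d A x) = x"
proof -
  obtain v M where xv: "x = (v, M)" by (cases x)
  have vz: "\<And>i. i \<notin> {1..d} \<Longrightarrow> v i = 0" and Mz: "\<And>i j. i \<notin> {1..d} \<or> j \<notin> {1..d} \<Longrightarrow> M i j = 0"
    using x xv unfolding Vsp_def by blast+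
  have z: "\<And>i j. i \<notin> {1..d} \<or> j \<notin> {1..d} \<Longrightarrow> A i j = 0" using Orth_zero[OF A] by blast
  have f: "(\<Sum>j=1..d. A j i * (\<Sum>l=1..d. A j l * v l)) = v i" for i
  proof (cases "i \<in> {1..d}")
    case True then show ?thesis by (rule contract_left[OF A])
  next
    case False then show ?thesis using z vz by simp
  qed
  have g: "(\<Sum>j=1..d. \<Sum>l=1..d. A j i * (\<Sum>p=1..d. \<Sum>q=1..d. A j p * M p q * A l q) * A l k) = M i k" for i k
  proof (cases "i \<in> {1..d} \<and> k \<in> {1..d}")
    case True
    have inner: "(\<Sum>l=1..d. A j i * (\<Sum>p=1..d. \<Sum>q=1..d. A j p * M p q * A l q) * A l k)
        = A j i * (\<Sum>p=1..d. A j p * M p k)" for j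
    proof -
      have e1: "(\<Sum>p=1..d. \<Sum>q=1..d. A j p * M p q * A l q) = (\<Sum>q=1..d. (\<Sum>p=1..d. A j p * M p q) * A l q)" for l
      proof -
        have "(\<Sum>p=1..d. \<Sum>q=1..d. A j p * M p q * A l q) = (\<Sum>q=1..d. \<Sum>p=1..d. A j p * M p q * A l q)"
          by (rule sum.swap)
        then show ?thesis by (simp add: sum_distrib_right)
      qed
      have "(\<Sum>l=1..d. A j i * (\<Sum>p=1..d. \<Sum>q=1..d. A j p * M p q * A l q) * A l k)
          = (\<Sum>l=1..d. A j i * ((\<Sum>q=1..d. (\<Sum>p=1..d. A j p * M p q) * A l q) * A l k))"
        unfolding e1 by (simp only: mult.assoc)
      also have "\<dots> = A j i * (\<Sum>l=1..d. (\<Sum>q=1..d. (\<Sum>p=1..d. A j p * M p q) * A l q) * A l k)"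
        by (simp only: sum_distrib_left)
      also have "\<dots> = A j i * (\<Sum>p=1..d. A j p * M p k)"
        using contract_right[OF A, of k "\<lambda>q. \<Sum>p=1..d. A j p * M p q"] True by simp
      finally show ?thesis .
    qed
    have "(\<Sum>j=1..d. \<Sum>l=1..d. A j i * (\<Sum>p=1..d. \<Sum>q=1..d. A j p * M p q * A l q) * A l k)
       = (\<Sum>j=1..d. A j i * (\<Sum>p=1..d. A j p * M p k))" using inner by simp
    also have "\<dots> = M i k" using contract_left[OF A, of i "\<lambda>p. M p k"] True by simp
    finally show ?thesis .
  next
    case False
    then have h: "\<And>j l. A j i * (\<Sum>p=1..d. \<Sum>q=1..d. A j p * M p q * A l q) * A l k = 0" using z by auto
    have "M i k = 0" using False Mz by blast
    then show ?thesis by (simp only: h sum.neutral_const)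
  qed
  have e: "act d A x = (\<lambda>i. \<Sum>j=1..d. A i j * v j, \<lambda>i k. \<Sum>j=1..d. \<Sum>l=1..d. A i j * M j l * A k l)"
    unfolding act_def xv by (simp only: prod.case)
  have "act d (\<lambda>i j. A j i) (act d A x) = (\<lambda>i. \<Sum>j=1..d. A j i * (\<Sum>l=1..d. A j l * v l),
      \<lambda>i k. \<Sum>j=1..d. \<Sum>l=1..d. A j i * (\<Sum>p=1..d. \<Sum>q=1..d. A j p * M p q * A l q) * A l k)"
    unfolding act_def[of d "\<lambda>i j. A j i"] e by (simp only: prod.case)
  also have "\<dots> = (v, M)" by (simp only: f g)
  finally show ?thesis using xv by simp
qed

section \<open>Lanczos vectors\<close>

definition dotp :: "nat \<Rightarrow> (nat \<Rightarrow> complex) \<Rightarrow> (nat \<Rightarrow> complex) \<Rightarrow> complex" where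
  "dotp d u w = (\<Sum>j=1..d. u j * w j)"

definition Mv :: "nat \<Rightarrow> pt \<Rightarrow> (nat \<Rightarrow> complex) \<Rightarrow> nat \<Rightarrow> complex" where
  "Mv d x u = (\<lambda>a. \<Sum>b=1..d. Mget x a b * u b)"

primrec st :: "nat \<Rightarrow> pt \<Rightarrow> nat \<Rightarrow> (nat \<Rightarrow> complex) \<times> (nat \<Rightarrow> complex) \<times> complex" where
  "st d x 0 = (\<lambda>_. 0, fst x, 1)"
| "st d x (Suc k) = (fst (snd (st d x k)),
     (\<lambda>i. snd (snd (st d x k)) * Mv d x (fst (snd (st d x k))) i
          + dotp d (fst (snd (st d x k))) (fst (snd (st d x k))) * fst (st d x k) i),
     snd (snd (st d x k)) * dotp d (fst (snd (st d x k))) (fst (snd (st d x k))))"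

definition rr :: "nat \<Rightarrow> pt \<Rightarrow> nat \<Rightarrow> nat \<Rightarrow> complex" where
  "rr d x k = fst (st d x k)"

definition nn :: "nat \<Rightarrow> pt \<Rightarrow> nat \<Rightarrow> complex" where
  "nn d x k = dotp d (rr d x k) (rr d x k)"

definition cc :: "nat \<Rightarrow> pt \<Rightarrow> nat \<Rightarrow> complex" where
  "cc d x k = snd (snd (st d x (k - 1)))"

lemma st_1: "fst (snd (st d x k)) = rr d x (Suc k)" by (simp add: rr_def)
lemma st_2: "snd (snd (st d x k)) = cc d x (Suc k)" by (simp add: cc_def)

lemma rr_0: "rr d x 0 = (\<lambda>_. 0)" by (simp add: rr_def)
lemma rr_1: "rr d x (Suc 0) = fst x" by (simp add: rr_def)
lemma rr_SS: "rr d x (Suc (Suc k)) = (\<lambda>i. cc d x (Suc k) * Mv d x (rr d x (Suc k)) i + nn d x (Suc k) * rr d x k i)"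
proof -
  have "rr d x (Suc (Suc k)) = fst (snd (st d x (Suc k)))" by (simp add: rr_def)
  also have "\<dots> = (\<lambda>i. snd (snd (st d x k)) * Mv d x (fst (snd (st d x k))) i
          + dotp d (fst (snd (st d x k))) (fst (snd (st d x k))) * fst (st d x k) i)" by simp
  also have "\<dots> = (\<lambda>i. cc d x (Suc k) * Mv d x (rr d x (Suc k)) i + nn d x (Suc k) * rr d x k i)"
    by (simp only: st_1 st_2 nn_def rr_def[symmetric])
  finally show ?thesis .
qed
lemma cc_1: "cc d x (Suc 0) = 1" by (simp add: cc_def)
lemma cc_SS: "cc d x (Suc (Suc k)) = cc d x (Suc k) * nn d x (Suc k)"
proof -
  have "cc d x (Suc (Suc k)) = snd (snd (st d x (Suc k)))" by (simp add: cc_def)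
  also have "\<dots> = snd (snd (st d x k)) * dotp d (fst (snd (st d x k))) (fst (snd (st d x k)))" by simp
  also have "\<dots> = cc d x (Suc k) * nn d x (Suc k)" by (simp only: st_1 st_2 nn_def)
  finally show ?thesis .
qed

lemma cc_prod: "cc d x (Suc k) = (\<Prod>l=1..k. nn d x l)"
proof (induction k)
  case 0 then show ?case by (simp add: cc_1)
next
  case (Suc k) then show ?case by (simp add: cc_SS prod.cl_ivl_Suc)
qed

lemma cc_factor: "j \<le> k \<Longrightarrow> \<exists>c. cc d x (Suc k) = cc d x (Suc j) * c"
proof (induction k)
  case 0 then show ?case by (intro exI[of _ 1]) simp
next
  case (Suc k)
  show ?case
  proof (cases "j = Suc k")
    case True then show ?thesis by (intro exI[of _ 1]) simp
  next
    case False
    then obtain c where "cc d x (Suc k) = cc d x (Suc j) * c" using Suc by auto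
    then show ?thesis by (intro exI[of _ "c * nn d x (Suc k)"]) (simp add: cc_SS)
  qed
qed

lemma dotp_comm: "dotp d u w = dotp d w u"
  unfolding dotp_def by (simp add: mult.commute)

lemma dotp_zero: "dotp d (\<lambda>_. 0) w = 0" unfolding dotp_def by simp

lemma dotp_lin: "dotp d (\<lambda>i. a * f i + b * g i) w = a * dotp d f w + b * dotp d g w"
  unfolding dotp_def by (simp add: sum.distrib sum_distrib_left algebra_simps)

lemma dotp_scale: "dotp d (\<lambda>i. a * f i) w = a * dotp d f w"
  unfolding dotp_def by (simp add: sum_distrib_left algebra_simps)

lemma dotp_lin_r: "dotp d w (\<lambda>i. a * f i + b * g i) = a * dotp d w f + b * dotp d w g"
  using dotp_lin[of d a f b g w] dotp_comm by metis

lemma dotp_cong: "(\<And>i. i \<in> {1..d} \<Longrightarrow> u i = u' i) \<Longrightarrow> (\<And>i. i \<in> {1..d} \<Longrightarrow> w i = w' i) \<Longrightarrow> dotp d u w = dotp d u' w'"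
  unfolding dotp_def by (intro sum.cong) auto

lemma Mv_cong: "(\<And>i. i \<in> {1..d} \<Longrightarrow> u i = u' i) \<Longrightarrow> Mv d x u = Mv d x u'"
  unfolding Mv_def by (intro ext sum.cong) auto

lemma dotp_Mv: "dotp d (Mv d x u) w = - dotp d u (Mv d x w)"
proof -
  have "dotp d (Mv d x u) w = (\<Sum>a=1..d. \<Sum>b=1..d. Mget x a b * u b * w a)"
    unfolding dotp_def Mv_def by (simp add: sum_distrib_right)
  also have "\<dots> = (\<Sum>b=1..d. \<Sum>a=1..d. Mget x a b * u b * w a)" by (rule sum.swap)
  also have "\<dots> = (\<Sum>b=1..d. - (u b * (\<Sum>a=1..d. Mget x b a * w a)))"
  proof (intro sum.cong refl)
    fix b
    have "(\<Sum>a=1..d. Mget x a b * u b * w a) = (\<Sum>a=1..d. - (u b * (Mget x b a * w a)))"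
      by (intro sum.cong refl) (simp add: Mget_skew[of x a b for a] algebra_simps)
    also have "\<dots> = - (u b * (\<Sum>a=1..d. Mget x b a * w a))" by (simp add: sum_negf sum_distrib_left)
    finally show "(\<Sum>a=1..d. Mget x a b * u b * w a) = - (u b * (\<Sum>a=1..d. Mget x b a * w a))" .
  qed
  also have "\<dots> = - dotp d u (Mv d x w)" unfolding dotp_def Mv_def by (simp add: sum_negf)
  finally show ?thesis .
qed

lemma dotp_Mv_self: "dotp d (Mv d x u) u = 0"
proof -
  have "dotp d (Mv d x u) u = - dotp d (Mv d x u) u"
    using dotp_Mv[of d x u u] dotp_comm[of d u "Mv d x u"] by simp
  then show ?thesis by simp
qed

lemma orth: "j < k \<Longrightarrow> dotp d (rr d x j) (rr d x k) = 0"
proof (induction k arbitrary: j rule: less_induct)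
  case (less k)
  show ?case
  proof (cases k)
    case 0 then show ?thesis using less by simp
  next
    case (Suc k1)
    show ?thesis
    proof (cases k1)
      case 0 then show ?thesis using less Suc by (simp add: rr_0 dotp_zero)
    next
      case (Suc K')
      define K where "K = Suc K'"
      have kK: "k = Suc K" using \<open>k = Suc k1\<close> Suc K_def by simp
      have rk: "rr d x k = (\<lambda>i. cc d x K * Mv d x (rr d x K) i + nn d x K * rr d x K' i)"
        using rr_SS[of d x K'] kK K_def by simp
      have IH: "\<And>a b. a < b \<Longrightarrow> b < k \<Longrightarrow> dotp d (rr d x a) (rr d x b) = 0" using less.IH by blast
      have e: "dotp d (rr d x j) (rr d x k) = cc d x K * dotp d (rr d x j) (Mv d x (rr d x K)) + nn d x K * dotp d (rr d x j) (rr d x K')"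
        unfolding rk by (rule dotp_lin_r)
      have jle: "j \<le> K" using less.prems kK by simp
      show ?thesis
      proof (cases "j = K")
        case True
        have "dotp d (rr d x j) (Mv d x (rr d x K)) = 0" using True dotp_Mv_self dotp_comm by metis
        moreover have "dotp d (rr d x j) (rr d x K') = 0" using True IH[of K' K] kK K_def dotp_comm by auto
        ultimately show ?thesis using e by simp
      next
        case False
        show ?thesis
        proof (cases "j = K'")
          case True
          show ?thesis
          proof (cases K')
            case 0 then show ?thesis using True by (simp add: rr_0 dotp_zero)
          next
            case (Suc J)
            have rK: "rr d x K = (\<lambda>i. cc d x K' * Mv d x (rr d x K') i + nn d x K' * rr d x J i)"
              using rr_SS[of d x J] Suc K_def by simp
            have ccK: "cc d x K = cc d x K' * nn d x K'" using cc_SS[of d x J] Suc K_def by simp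
            have "cc d x K' * dotp d (Mv d x (rr d x K')) (rr d x K)
                = dotp d (\<lambda>i. cc d x K' * Mv d x (rr d x K') i + 0 * rr d x J i) (rr d x K)"
              using dotp_lin[of d "cc d x K'" "Mv d x (rr d x K')" 0 "rr d x J" "rr d x K"] by simp
            also have "\<dots> = dotp d (\<lambda>i. 1 * rr d x K i + (- nn d x K') * rr d x J i) (rr d x K)"
              unfolding rK by (simp add: algebra_simps)
            also have "\<dots> = nn d x K - nn d x K' * dotp d (rr d x J) (rr d x K)"
              by (simp only: dotp_lin) (simp add: nn_def)
            also have "\<dots> = nn d x K" using IH[of J K] Suc K_def kK by simp
            finally have h: "cc d x K' * dotp d (Mv d x (rr d x K')) (rr d x K) = nn d x K" .
            have "dotp d (rr d x j) (rr d x k) = cc d x K' * nn d x K' * (- dotp d (Mv d x (rr d x K')) (rr d x K)) + nn d x K * nn d x K'"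
              using e True ccK dotp_Mv[of d x "rr d x K'" "rr d x K"] dotp_comm nn_def
              by (metis minus_minus)
            also have "\<dots> = 0" using h by (simp add: algebra_simps)
            finally show ?thesis .
          qed
        next
          case False2: False
          have jK': "j < K'" using jle False False2 K_def by simp
          have z2: "dotp d (rr d x j) (rr d x K') = 0" using IH[OF jK'] kK K_def by simp
          show ?thesis
          proof (cases j)
            case 0 then show ?thesis by (simp add: rr_0 dotp_zero)
          next
            case (Suc J)
            have rj: "rr d x (Suc j) = (\<lambda>i. cc d x j * Mv d x (rr d x j) i + nn d x j * rr d x J i)"
              using rr_SS[of d x J] Suc by simp
            obtain c where c: "cc d x K = cc d x j * c" using cc_factor[of J K' d x] Suc jK' K_def by auto
            have "cc d x j * dotp d (Mv d x (rr d x j)) (rr d x K)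
                = dotp d (\<lambda>i. cc d x j * Mv d x (rr d x j) i) (rr d x K)"
              by (simp only: dotp_scale)
            also have "\<dots> = dotp d (\<lambda>i. 1 * rr d x (Suc j) i + (- nn d x j) * rr d x J i) (rr d x K)"
              unfolding rj by (simp add: algebra_simps)
            also have "\<dots> = dotp d (rr d x (Suc j)) (rr d x K) - nn d x j * dotp d (rr d x J) (rr d x K)"
              by (simp only: dotp_lin) simp
            also have "\<dots> = 0" using IH[of "Suc j" K] IH[of J K] jK' Suc K_def kK by simp
            finally have h: "cc d x j * dotp d (Mv d x (rr d x j)) (rr d x K) = 0" .
            have "dotp d (rr d x j) (rr d x k) = c * (cc d x j * (- dotp d (Mv d x (rr d x j)) (rr d x K)))"
              using e z2 c dotp_Mv[of d x "rr d x j" "rr d x K"] dotp_comm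
              by (simp add: algebra_simps)
            also have "\<dots> = 0" using h by simp
            finally show ?thesis .
          qed
        qed
      qed
    qed
  qed
qed

lemma pf_Mv:
  assumes "i \<in> {1..d}" "\<And>j. j \<in> {1..d} \<Longrightarrow> poly_fun d \<real> (\<lambda>x. u x j)"
  shows "poly_fun d \<real> (\<lambda>x. Mv d x (u x) i)"
  unfolding Mv_def using assms by (auto intro!: pf_sum poly_fun.mult pf_Mget)

lemma pf_dotp:
  assumes "\<And>j. j \<in> {1..d} \<Longrightarrow> poly_fun d \<real> (\<lambda>x. u x j)" "\<And>j. j \<in> {1..d} \<Longrightarrow> poly_fun d \<real> (\<lambda>x. w x j)"
  shows "poly_fun d \<real> (\<lambda>x. dotp d (u x) (w x))"
  unfolding dotp_def using assms by (auto intro!: pf_sum poly_fun.mult)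

lemma pf_st: "(\<forall>i\<in>{1..d}. poly_fun d \<real> (\<lambda>x. fst (st d x k) i) \<and> poly_fun d \<real> (\<lambda>x. fst (snd (st d x k)) i))
     \<and> poly_fun d \<real> (\<lambda>x. snd (snd (st d x k)))"
proof (induction k)
  case 0 then show ?case by (auto intro: poly_fun.intros)
next
  case (Suc k)
  have a: "\<And>j. j \<in> {1..d} \<Longrightarrow> poly_fun d \<real> (\<lambda>x. fst (st d x k) j)"
   and b: "\<And>j. j \<in> {1..d} \<Longrightarrow> poly_fun d \<real> (\<lambda>x. fst (snd (st d x k)) j)"
   and c: "poly_fun d \<real> (\<lambda>x. snd (snd (st d x k)))" using Suc by auto
  have dd: "poly_fun d \<real> (\<lambda>x. dotp d (fst (snd (st d x k))) (fst (snd (st d x k))))"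
    by (rule pf_dotp[OF b b])
  show ?case using a b c dd pf_Mv[OF _ b]
    by (auto intro!: poly_fun.add poly_fun.mult)
qed

lemma pf_rr: "i \<in> {1..d} \<Longrightarrow> poly_fun d \<real> (\<lambda>x. rr d x k i)"
  unfolding rr_def using pf_st by blast

lemma pf_nn: "poly_fun d \<real> (\<lambda>x. nn d x k)"
  unfolding nn_def by (rule pf_dotp) (auto intro: pf_rr)

lemma pf_cc: "poly_fun d \<real> (\<lambda>x. cc d x k)"
  unfolding cc_def using pf_st by blast

definition matv :: "(nat \<Rightarrow> nat \<Rightarrow> complex) \<Rightarrow> nat \<Rightarrow> (nat \<Rightarrow> complex) \<Rightarrow> nat \<Rightarrow> complex" where
  "matv A d u = (\<lambda>a. \<Sum>b=1..d. A a b * u b)"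

lemma dotp_matv: assumes A: "A \<in> Orth d K" shows "dotp d (matv A d u) (matv A d w) = dotp d u w"
proof -
  have "dotp d (matv A d u) (matv A d w) = (\<Sum>a=1..d. \<Sum>b=1..d. A a b * u b * (\<Sum>c=1..d. A a c * w c))"
    unfolding dotp_def matv_def by (simp add: sum_distrib_right)
  also have "\<dots> = (\<Sum>b=1..d. \<Sum>a=1..d. A a b * u b * (\<Sum>c=1..d. A a c * w c))" by (rule sum.swap)
  also have "\<dots> = (\<Sum>b=1..d. u b * (\<Sum>a=1..d. A a b * (\<Sum>c=1..d. A a c * w c)))"
    by (simp add: sum_distrib_left mult_ac)
  also have "\<dots> = (\<Sum>b=1..d. u b * w b)"
  proof (intro sum.cong refl)
    fix b assume "b \<in> {1..d}"
    then show "u b * (\<Sum>a=1..d. A a b * (\<Sum>c=1..d. A a c * w c)) = u b * w b"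
      using contract_left[OF A, of b w] by simp
  qed
  finally show ?thesis unfolding dotp_def .
qed

lemma Mv_act:
  assumes A: "A \<in> Orth d K" and x: "x \<in> Vsp d" and a: "a \<in> {1..d}"
  shows "Mv d (act d A x) (matv A d u) a = matv A d (Mv d x u) a"
proof -
  obtain v M where xv: "x = (v, M)" by (cases x)
  have Ax: "act d A x \<in> Vsp d" by (rule act_Vsp[OF A x])
  have e: "snd (act d A x) = (\<lambda>i k. \<Sum>j=1..d. \<Sum>l=1..d. A i j * M j l * A k l)"
    unfolding act_def xv by simp
  have "Mv d (act d A x) (matv A d u) a = (\<Sum>j=1..d. (\<Sum>p=1..d. \<Sum>q=1..d. A a p * M p q * A j q) * (\<Sum>c=1..d. A j c * u c))"
    unfolding Mv_def matv_def Mget_Vsp[OF Ax] e by simp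
  also have "\<dots> = (\<Sum>j=1..d. \<Sum>p=1..d. \<Sum>q=1..d. A a p * M p q * (A j q * (\<Sum>c=1..d. A j c * u c)))"
    by (simp add: sum_distrib_right mult.assoc)
  also have "\<dots> = (\<Sum>p=1..d. \<Sum>j=1..d. \<Sum>q=1..d. A a p * M p q * (A j q * (\<Sum>c=1..d. A j c * u c)))"
    by (rule sum.swap)
  also have "\<dots> = (\<Sum>p=1..d. \<Sum>q=1..d. \<Sum>j=1..d. A a p * M p q * (A j q * (\<Sum>c=1..d. A j c * u c)))"
    by (intro sum.cong refl sum.swap)
  also have "\<dots> = (\<Sum>p=1..d. \<Sum>q=1..d. A a p * M p q * (\<Sum>j=1..d. A j q * (\<Sum>c=1..d. A j c * u c)))"
    by (simp add: sum_distrib_left)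
  also have "\<dots> = (\<Sum>p=1..d. \<Sum>q=1..d. A a p * M p q * u q)"
  proof (intro sum.cong refl)
    fix p q assume "q \<in> {1..d}"
    then show "A a p * M p q * (\<Sum>j=1..d. A j q * (\<Sum>c=1..d. A j c * u c)) = A a p * M p q * u q"
      using contract_left[OF A, of q u] by simp
  qed
  also have "\<dots> = matv A d (Mv d x u) a"
  proof -
    have MM: "\<And>p q. Mget x p q = M p q" using Mget_Vsp[OF x] xv by simp
    show ?thesis unfolding matv_def Mv_def MM by (simp add: sum_distrib_left mult.assoc)
  qed
  finally show ?thesis .
qed

lemma matv_lin: "matv A d (\<lambda>i. c * f i + n * g i) a = c * matv A d f a + n * matv A d g a"
  unfolding matv_def by (simp add: sum.distrib sum_distrib_left algebra_simps)

lemma rr_act: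
  assumes A: "A \<in> Orth d K" and x: "x \<in> Vsp d"
  shows "\<forall>l\<le>k. \<forall>a\<in>{1..d}. rr d (act d A x) l a = matv A d (rr d x l) a"
proof (induction k)
  case 0 then show ?case by (simp add: rr_0 matv_def)
next
  case (Suc k)
  have nn_eq: "nn d (act d A x) l = nn d x l" if "l \<le> k" for l
  proof -
    have "nn d (act d A x) l = dotp d (matv A d (rr d x l)) (matv A d (rr d x l))"
      unfolding nn_def by (rule dotp_cong) (use Suc that in auto)
    then show ?thesis using dotp_matv[OF A] nn_def by simp
  qed
  have last: "\<forall>a\<in>{1..d}. rr d (act d A x) (Suc k) a = matv A d (rr d x (Suc k)) a"
  proof (cases k)
    case 0
    obtain v M where xv: "x = (v, M)" by (cases x)
    show ?thesis using 0 by (simp add: rr_1 act_def xv matv_def)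
  next
    case (Suc k0)
    have cc_eq: "cc d (act d A x) (Suc k0) = cc d x (Suc k0)"
      unfolding cc_prod using nn_eq Suc by (intro prod.cong) auto
    show ?thesis
    proof
      fix a assume a: "a \<in> {1..d}"
      have "rr d (act d A x) (Suc k) a = cc d x (Suc k0) * Mv d (act d A x) (rr d (act d A x) (Suc k0)) a
              + nn d x (Suc k0) * rr d (act d A x) k0 a"
        using rr_SS[of d "act d A x" k0] Suc cc_eq nn_eq[of "Suc k0"] by simp
      also have "\<dots> = cc d x (Suc k0) * Mv d (act d A x) (matv A d (rr d x (Suc k0))) a
              + nn d x (Suc k0) * matv A d (rr d x k0) a"
      proof -
        have "Mv d (act d A x) (rr d (act d A x) (Suc k0)) = Mv d (act d A x) (matv A d (rr d x (Suc k0)))"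
          by (rule Mv_cong) (use Suc.IH Suc in auto)
        moreover have "rr d (act d A x) k0 a = matv A d (rr d x k0) a" using Suc.IH Suc a by auto
        ultimately show ?thesis by simp
      qed
      also have "\<dots> = cc d x (Suc k0) * matv A d (Mv d x (rr d x (Suc k0))) a + nn d x (Suc k0) * matv A d (rr d x k0) a"
        using Mv_act[OF A x a] by simp
      also have "\<dots> = matv A d (rr d x (Suc k)) a"
        unfolding Suc rr_SS matv_lin ..
      finally show "rr d (act d A x) (Suc k) a = matv A d (rr d x (Suc k)) a" .
    qed
  qed
  show ?case using Suc.IH last le_Suc_eq by auto
qed

lemma nn_act: assumes A: "A \<in> Orth d K" and x: "x \<in> Vsp d" shows "nn d (act d A x) l = nn d x l"
proof -
  have "nn d (act d A x) l = dotp d (matv A d (rr d x l)) (matv A d (rr d x l))"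
    unfolding nn_def by (rule dotp_cong) (use rr_act[OF A x, of l] in auto)
  then show ?thesis using dotp_matv[OF A] nn_def by simp
qed

lemma cc_act: assumes A: "A \<in> Orth d K" and x: "x \<in> Vsp d" shows "cc d (act d A x) (Suc l) = cc d x (Suc l)"
  unfolding cc_prod using nn_act[OF A x] by simp

section \<open>The subspaces L\<close>

definition Lcond :: "nat \<Rightarrow> nat \<Rightarrow> pt \<Rightarrow> bool" where
  "Lcond d m x = (x \<in> Vsp d \<and> (\<forall>a\<in>{1..d-1}. fst x a = 0)
      \<and> (\<forall>a b. 1 \<le> a \<longrightarrow> a + 2 \<le> b \<longrightarrow> b \<le> d \<longrightarrow> d + 2 \<le> b + m \<longrightarrow> snd x a b = 0))"

declare Lset.simps [simp del]

lemma Lset_char: "Suc n \<le> d - 1 \<Longrightarrow> Lset d (Suc n) = {x. Lcond d (Suc n) x}"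
proof (induction n)
  case 0
  show ?case unfolding Lcond_def by (auto simp: Lset.simps)
next
  case (Suc n)
  have IH: "Lset d (Suc n) = {x. Lcond d (Suc n) x}" using Suc by simp
  have e: "d - (n + 2) + 2 = d - n" using Suc.prems by simp
  show ?case
  proof (intro Set.set_eqI iffI)
    fix x assume "x \<in> Lset d (Suc (Suc n))"
    then have x: "Lcond d (Suc n) x" "\<forall>k\<in>{1..d - (n+2)}. snd x k (d - n) = 0"
      using IH e by (auto simp: Lset.simps)
    show "x \<in> {x. Lcond d (Suc (Suc n)) x}"
      unfolding mem_Collect_eq Lcond_def
    proof (intro conjI allI impI)
      show "x \<in> Vsp d" "\<forall>a\<in>{1..d - 1}. fst x a = 0" using x(1) unfolding Lcond_def by auto
      fix a b assume ab: "1 \<le> a" "a + 2 \<le> b" "b \<le> d" "d + 2 \<le> b + Suc (Suc n)"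
      show "snd x a b = 0"
      proof (cases "d + 2 \<le> b + Suc n")
        case True then show ?thesis using x(1) ab unfolding Lcond_def by auto
      next
        case False
        then have "b = d - n" using ab by simp
        then show ?thesis using x(2) ab by auto
      qed
    qed
  next
    fix x assume "x \<in> {x. Lcond d (Suc (Suc n)) x}"
    then have x: "Lcond d (Suc (Suc n)) x" by simp
    have 1: "Lcond d (Suc n) x" using x unfolding Lcond_def by auto
    have 2: "\<forall>k\<in>{1..d - (n+2)}. snd x k (d - n) = 0" using x Suc.prems unfolding Lcond_def by auto
    show "x \<in> Lset d (Suc (Suc n))" using 1 2 IH e by (simp add: Lset.simps)
  qed
qed

lemma Lset_char2: assumes "1 \<le> m" "m \<le> d - 1" shows "Lset d m = {x. Lcond d m x}"
proof -
  obtain n where n: "m = Suc n" using assms by (cases m) auto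
  show ?thesis unfolding n by (rule Lset_char) (use assms n in simp)
qed

lemma Lcond_mono: "Lcond d m x \<Longrightarrow> m' \<le> m \<Longrightarrow> Lcond d m' x"
  unfolding Lcond_def by force

lemma Lcond_line_closed: "line_closed {x. Lcond d m x}"
  unfolding line_closed_def
proof (intro ballI allI)
  fix x y t assume x: "x \<in> {x. Lcond d m x}" and y: "y \<in> {x. Lcond d m x}"
  have xv: "x \<in> Vsp d" "y \<in> Vsp d" using x y unfolding Lcond_def by auto
  have "lin x y t \<in> Vsp d" using Vsp_line_closed xv unfolding line_closed_def by blast
  moreover have "\<forall>a\<in>{1..d-1}. fst (lin x y t) a = 0" using x y unfolding Lcond_def lin_def by simp
  moreover have "\<forall>a b. 1 \<le> a \<longrightarrow> a + 2 \<le> b \<longrightarrow> b \<le> d \<longrightarrow> d + 2 \<le> b + m \<longrightarrow> snd (lin x y t) a b = 0"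
    using x y unfolding Lcond_def lin_def by simp
  ultimately show "lin x y t \<in> {x. Lcond d m x}" unfolding Lcond_def by simp
qed

definition supp :: "nat \<Rightarrow> pt \<Rightarrow> nat \<Rightarrow> bool" where
  "supp d x j = (\<forall>a\<in>{1..d}. a \<noteq> d + 1 - j \<longrightarrow> rr d x j a = 0)"

lemma sum_single:
  assumes "q \<in> {1..d}" "\<And>b. b \<in> {1..d} \<Longrightarrow> b \<noteq> q \<Longrightarrow> f b = 0"
  shows "(\<Sum>b=1..(d::nat). f b) = (f q :: complex)"
proof -
  have "(\<Sum>b=1..d. f b) = (\<Sum>b\<in>{q}. f b)"
    by (rule sum.mono_neutral_right) (use assms in auto)
  then show ?thesis by simp
qed

lemma rr_step:
  assumes L: "Lcond d m x" and md: "m < d" and km: "k + 1 \<le> m"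
    and s0: "supp d x k" and s1: "supp d x (k + 1)" and a: "a \<in> {1..d}"
  shows "rr d x (k + 2) a = (if a < d - k then cc d x (k + 1) * snd x a (d - k) * rr d x (k + 1) (d - k) else 0)"
proof -
  define q where "q = d - k"
  have q: "q \<in> {1..d}" "d + 1 - (k + 1) = q" "d + 1 - k = q + 1" using md km unfolding q_def by auto
  have xV: "x \<in> Vsp d" using L unfolding Lcond_def by simp
  have r2: "rr d x (k + 2) a = cc d x (k + 1) * Mv d x (rr d x (k + 1)) a + nn d x (k + 1) * rr d x k a"
    using rr_SS[of d x k] by simp
  have Mq: "Mv d x (rr d x (k + 1)) a = Mget x a q * rr d x (k + 1) q"
    unfolding Mv_def by (rule sum_single[OF q(1)]) (use s1 q in \<open>auto simp: supp_def\<close>)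
  have rk: "a \<noteq> q + 1 \<Longrightarrow> rr d x k a = 0" using s0 a q unfolding supp_def by auto
  consider "a < q" | "a = q" | "a = q + 1" | "a > q + 1" by linarith
  then show ?thesis
  proof cases
    case 1
    then show ?thesis using r2 Mq rk unfolding Mget_def q_def by simp
  next
    case 2
    then show ?thesis using r2 Mq rk unfolding Mget_def q_def by simp
  next
    case 3
    have k1: "k \<ge> 1" using 3 a q_def by auto
    define \<sigma> where "\<sigma> = rr d x k (q + 1)"
    have "dotp d (rr d x k) (rr d x (k + 2)) = \<sigma> * rr d x (k + 2) (q + 1)"
      unfolding dotp_def \<sigma>_def by (rule sum_single) (use 3 a s0 q in \<open>auto simp: supp_def\<close>)
    moreover have "dotp d (rr d x k) (rr d x (k + 2)) = 0" by (rule orth) simp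
    ultimately have h: "\<sigma> * rr d x (k + 2) (q + 1) = 0" by simp
    have "rr d x (k + 2) a = 0"
    proof (cases "\<sigma> = 0")
      case True
      have "nn d x k = \<sigma> * \<sigma>"
        unfolding nn_def dotp_def \<sigma>_def by (rule sum_single) (use 3 a s0 q in \<open>auto simp: supp_def\<close>)
      then have "nn d x k = 0" using True by simp
      then have "cc d x (k + 1) = 0" unfolding cc_prod[of d x k, simplified] using k1
        by (metis (no_types, lifting) Suc_eq_plus1 atLeastAtMost_iff cc_prod finite_atLeastAtMost order_refl prod_zero_iff)
      then show ?thesis using r2 True 3 \<sigma>_def by simp
    next
      case False then show ?thesis using h 3 by simp
    qed
    then show ?thesis using 3 q_def by simp
  next
    case 4
    have "snd x q a = 0" using L 4 a q km unfolding Lcond_def by auto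
    then have "Mget x a q = 0" using 4 unfolding Mget_def by simp
    then show ?thesis using r2 Mq rk 4 q_def by simp
  qed
qed

lemma supp_L:
  assumes L: "Lcond d m x" and md: "m < d"
  shows "j \<le> m \<Longrightarrow> supp d x j"
proof (induction j rule: less_induct)
  case (less j)
  show ?case
  proof (cases j)
    case 0 then show ?thesis unfolding supp_def by (simp add: rr_0)
  next
    case (Suc j1)
    show ?thesis
    proof (cases j1)
      case 0
      then show ?thesis using L Suc unfolding supp_def Lcond_def by (auto simp: rr_1)
    next
      case (Suc k)
      have jk: "j = k + 2" using \<open>j = Suc j1\<close> Suc by simp
      have s0: "supp d x k" and s1: "supp d x (k + 1)" using less jk by auto
      show ?thesis unfolding supp_def
      proof (intro ballI impI)
        fix a assume a: "a \<in> {1..d}" and an: "a \<noteq> d + 1 - j"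
        have st: "rr d x (k + 2) a = (if a < d - k then cc d x (k + 1) * snd x a (d - k) * rr d x (k + 1) (d - k) else 0)"
          by (rule rr_step[OF L md _ s0 s1 a]) (use less jk in simp)
        show "rr d x j a = 0"
        proof (cases "a < d - k")
          case True
          then have "snd x a (d - k) = 0" using L a an jk less md unfolding Lcond_def by auto
          then show ?thesis using st jk by simp
        next
          case False then show ?thesis using st jk by simp
        qed
      qed
    qed
  qed
qed

lemma nn_L:
  assumes L: "Lcond d (k + 1) x" and kd: "k + 2 \<le> d"
  shows "nn d x (k + 2) = hfun d (k + 2) x * nn d x (k + 1) * (cc d x (k + 1))^2"
proof -
  have md: "k + 1 < d" using kd by simp
  have s0: "supp d x k" and s1: "supp d x (k + 1)" using supp_L[OF L md] by auto
  define q where "q = d - k"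
  define \<rho> where "\<rho> = rr d x (k + 1) q"
  have q: "q \<in> {1..d}" "d + 1 - (k + 1) = q" using kd unfolding q_def by auto
  have st: "\<And>a. a \<in> {1..d} \<Longrightarrow> rr d x (k + 2) a = (if a < q then cc d x (k + 1) * snd x a q * \<rho> else 0)"
    using rr_step[OF L md _ s0 s1] unfolding q_def \<rho>_def by simp
  have n1: "nn d x (k + 1) = \<rho> * \<rho>"
    unfolding nn_def dotp_def \<rho>_def by (rule sum_single[OF q(1)]) (use s1 q in \<open>auto simp: supp_def\<close>)
  have "nn d x (k + 2) = (\<Sum>a=1..d. (if a < q then (cc d x (k + 1) * snd x a q * \<rho>)^2 else 0))"
    unfolding nn_def dotp_def
  proof (intro sum.cong refl)
    fix a assume a: "a \<in> {1..d}"
    show "rr d x (k + 2) a * rr d x (k + 2) a = (if a < q then (cc d x (k + 1) * snd x a q * \<rho>)^2 else 0)"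
      using st[OF a] by (simp add: power2_eq_square)
  qed
  also have "\<dots> = (\<Sum>a=1..q-1. (if a < q then (cc d x (k + 1) * snd x a q * \<rho>)^2 else 0))"
    by (rule sum.mono_neutral_right) (use q in auto)
  also have "\<dots> = (\<Sum>a=1..q-1. (cc d x (k + 1))^2 * \<rho>^2 * (snd x a q)^2)"
    by (intro sum.cong refl) (auto simp: power_mult_distrib)
  also have "\<dots> = (cc d x (k + 1))^2 * \<rho>^2 * (\<Sum>a=1..q-1. (snd x a q)^2)"
    by (simp add: sum_distrib_left)
  finally have e: "nn d x (k + 2) = (cc d x (k + 1))^2 * \<rho>^2 * (\<Sum>a=1..q-1. (snd x a q)^2)" .
  have h: "hfun d (k + 2) x = (\<Sum>a=1..q-1. (snd x a q)^2)"
  proof -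
    have i1: "d - (k + 2) + 1 = q - 1" and i2: "d - (k + 2) + 2 = q" using kd unfolding q_def by auto
    have "hfun d (k + 2) x = (\<Sum>a=1..d - (k + 2) + 1. (snd x a (d - (k + 2) + 2))^2)"
      unfolding hfun_def by simp
    then show ?thesis unfolding i1 i2 .
  qed
  show ?thesis using e h n1 by (simp add: power2_eq_square mult_ac)
qed

definition x0 :: "nat \<Rightarrow> pt" where
  "x0 d = (\<lambda>a. if a = d then 1 else 0,
           \<lambda>a b. if 1 \<le> a \<and> b = a + 1 \<and> b \<le> d then 1 else if 1 \<le> b \<and> a = b + 1 \<and> a \<le> d then -1 else 0)"

lemma x0_Vsp: "1 \<le> d \<Longrightarrow> x0 d \<in> Vsp d"
  unfolding Vsp_char x0_def by auto

lemma x0_VR: "1 \<le> d \<Longrightarrow> x0 d \<in> VR d"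
  unfolding VR_char using x0_Vsp by (auto simp: x0_def)

lemma x0_L: "1 \<le> d \<Longrightarrow> Lcond d m (x0 d)"
  unfolding Lcond_def using x0_Vsp by (auto simp: x0_def)

lemma x0_h: assumes "k + 2 \<le> d" shows "hfun d (k + 2) (x0 d) = 1"
proof -
  have i1: "d - (k + 2) + 1 = d - k - 1" and i2: "d - (k + 2) + 2 = d - k" using assms by auto
  have "hfun d (k + 2) (x0 d) = (\<Sum>a=1..d - (k + 2) + 1. (snd (x0 d) a (d - (k + 2) + 2))^2)"
    unfolding hfun_def by simp
  also have "\<dots> = (\<Sum>a=1..d - k - 1. (snd (x0 d) a (d - k))^2)" unfolding i1 i2 ..
  also have "\<dots> = (snd (x0 d) (d - k - 1) (d - k))^2"
  proof (rule sum_single)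
    show "d - k - 1 \<in> {1..d - k - 1}" using assms by auto
  next
    fix b assume b: "b \<in> {1..d - k - 1}" "b \<noteq> d - k - 1"
    then have "b + 1 \<noteq> d - k" "d - k \<noteq> b" "d - k + 1 \<noteq> b" using assms by auto
    then show "(snd (x0 d) b (d - k))^2 = 0" unfolding x0_def by simp
  qed
  also have "\<dots> = 1"
  proof -
    define p where "p = d - k - 1"
    have h: "1 \<le> p" "p + 1 \<le> d" and e: "d - k = p + 1" using assms unfolding p_def by auto
    have f: "(snd (x0 d) p (p + 1))^2 = 1" using h by (simp add: x0_def)
    have pk: "d - k - 1 = p" by (simp add: p_def)
    show ?thesis by (subst pk, subst e) (rule f)
  qed
  finally show ?thesis .
qed

lemma x0_nn: assumes d: "2 \<le> d" shows "k \<in> {1..d} \<Longrightarrow> nn d (x0 d) k \<noteq> 0"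
proof (induction k rule: less_induct)
  case (less k)
  show ?case
  proof (cases "k = 1")
    case True
    have "nn d (x0 d) 1 = (\<Sum>j=1..d. fst (x0 d) j * fst (x0 d) j)"
      unfolding nn_def dotp_def using rr_1[of d "x0 d"] by simp
    also have "\<dots> = fst (x0 d) d * fst (x0 d) d"
      by (rule sum_single) (use d in \<open>auto simp: x0_def\<close>)
    finally have "nn d (x0 d) 1 = fst (x0 d) d * fst (x0 d) d" .
    then show ?thesis using True by (simp add: x0_def)
  next
    case False
    define j where "j = k - 2"
    have kj: "k = j + 2" using less.prems False unfolding j_def by auto
    have L: "Lcond d (j + 1) (x0 d)" using x0_L d by simp
    have e: "nn d (x0 d) (j + 2) = 1 * nn d (x0 d) (j + 1) * (cc d (x0 d) (j + 1))^2"
      using nn_L[OF L] x0_h less.prems kj by simp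
    have "nn d (x0 d) (j + 1) \<noteq> 0" using less.IH[of "j + 1"] less.prems kj by simp
    moreover have "cc d (x0 d) (j + 1) \<noteq> 0"
    proof -
      have "\<forall>l\<in>{1..j}. nn d (x0 d) l \<noteq> 0" using less.IH less.prems kj by auto
      then show ?thesis using cc_prod[of d "x0 d" j] by simp
    qed
    ultimately show ?thesis using e kj by simp
  qed
qed

section \<open>The reduction matrix\<close>

definition Red :: "nat \<Rightarrow> pt \<Rightarrow> nat \<Rightarrow> nat \<Rightarrow> complex" where
  "Red d x = (\<lambda>a b. if a \<in> {1..d} \<and> b \<in> {1..d} then rr d x (d + 1 - a) b / csqrt (nn d x (d + 1 - a)) else 0)"

lemma dotp_orth: "j \<noteq> k \<Longrightarrow> dotp d (rr d x j) (rr d x k) = 0"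
  using orth[of j k] orth[of k j] dotp_comm by (metis linorder_neqE_nat)

lemma cc_nz: "(\<forall>k\<in>{1..d}. nn d x k \<noteq> 0) \<Longrightarrow> l < d \<Longrightarrow> cc d x (Suc l) \<noteq> 0"
  unfolding cc_prod by auto

lemma Red_rows:
  assumes nz: "\<forall>k\<in>{1..d}. nn d x k \<noteq> 0" and a: "a \<in> {1..d}" and a': "a' \<in> {1..d}"
  shows "(\<Sum>j=1..d. Red d x a j * Red d x a' j) = dotp d (rr d x (d + 1 - a)) (rr d x (d + 1 - a')) / (csqrt (nn d x (d + 1 - a)) * csqrt (nn d x (d + 1 - a')))"
  unfolding dotp_def Red_def using a a' by (simp add: sum_divide_distrib)

lemma Red_Orth:
  assumes nz: "\<forall>k\<in>{1..d}. nn d x k \<noteq> 0"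
  shows "Red d x \<in> Orth d UNIV"
  unfolding Orth_def
proof (intro CollectI conjI allI impI ballI)
  fix i j assume "i \<notin> {1..d} \<or> j \<notin> {1..d}"
  then show "Red d x i j = 0" unfolding Red_def by auto
next
  fix a a' assume a: "a \<in> {1..d}" and a': "a' \<in> {1..d}"
  have k: "d + 1 - a \<in> {1..d}" using a by auto
  show "(\<Sum>j=1..d. Red d x a j * Red d x a' j) = (if a = a' then 1 else 0)"
  proof (cases "a = a'")
    case True
    have "nn d x (d + 1 - a) \<noteq> 0" using nz k by blast
    then have "nn d x (d + 1 - a) / (csqrt (nn d x (d + 1 - a)) * csqrt (nn d x (d + 1 - a))) = 1"
      by (metis div_self power2_csqrt power2_eq_square)
    then show ?thesis using Red_rows[OF nz a a'] True nn_def by simp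
  next
    case False
    then have "d + 1 - a \<noteq> d + 1 - a'" using a a' by auto
    then show ?thesis using Red_rows[OF nz a a'] False dotp_orth by simp
  qed
qed (auto)

lemma st_real: "x \<in> VR d \<Longrightarrow> (\<forall>b. fst (st d x k) b \<in> \<real>) \<and> (\<forall>b. fst (snd (st d x k)) b \<in> \<real>) \<and> snd (snd (st d x k)) \<in> \<real>"
proof (induction k)
  case 0 then show ?case unfolding VR_char by simp
next
  case (Suc k)
  have M: "\<And>a b. Mget x a b \<in> \<real>" using Suc.prems unfolding VR_char Mget_def by auto
  have Mv: "\<And>u a. (\<And>b. u b \<in> \<real>) \<Longrightarrow> Mv d x u a \<in> \<real>" unfolding Mv_def using M by (auto intro!: sum_in_Reals Reals_mult)
  have dt: "\<And>u w. (\<And>b. u b \<in> \<real>) \<Longrightarrow> (\<And>b. w b \<in> \<real>) \<Longrightarrow> dotp d u w \<in> \<real>" unfolding dotp_def by (auto intro!: sum_in_Reals Reals_mult)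
  show ?case using Suc Mv dt by (auto intro!: Reals_add Reals_mult)
qed

lemma rr_real: "x \<in> VR d \<Longrightarrow> rr d x k b \<in> \<real>"
  unfolding rr_def using st_real by blast

lemma dotp_real_self: assumes "\<And>b. u b \<in> \<real>" shows "dotp d u u = of_real (\<Sum>j=1..d. (Re (u j))^2)"
proof -
  have "dotp d u u = (\<Sum>j=1..d. of_real (Re (u j)) * of_real (Re (u j)))"
    unfolding dotp_def using assms by (simp add: of_real_Re)
  then show ?thesis by (simp add: power2_eq_square)
qed

lemma Red_real:
  assumes x: "x \<in> VR d" and nz: "\<forall>k\<in>{1..d}. nn d x k \<noteq> 0"
  shows "Red d x \<in> Orth d \<real>"
proof -
  have "\<And>a b. Red d x a b \<in> \<real>"
  proof -
    fix a b
    obtain t where t: "nn d x (d + 1 - a) = of_real t" "t \<ge> 0"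
      using dotp_real_self[of "rr d x (d + 1 - a)" d] rr_real[OF x] unfolding nn_def
      by (meson sum_nonneg zero_le_power2)
    have "csqrt (nn d x (d + 1 - a)) \<in> \<real>" using t csqrt_of_real by simp
    then show "Red d x a b \<in> \<real>" unfolding Red_def using rr_real[OF x] by (auto intro!: Reals_divide)
  qed
  then show ?thesis using Red_Orth[OF nz] unfolding Orth_def by blast
qed

lemma act_Red_L:
  assumes d: "2 \<le> d" and x: "x \<in> Vsp d" and nz: "\<forall>k\<in>{1..d}. nn d x k \<noteq> 0"
  shows "act d (Red d x) x \<in> Lset d (d - 1)"
proof -
  obtain v M where xv: "x = (v, M)" by (cases x)
  define R where "R = Red d x"
  define s where "s = (\<lambda>k. csqrt (nn d x k))"
  have RO: "R \<in> Orth d UNIV" unfolding R_def by (rule Red_Orth[OF nz])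
  have MM: "\<And>p q. M p q = Mget x p q" using Mget_Vsp[OF x] xv by simp
  have vv: "v = rr d x 1" using rr_1[of d x] xv by simp
  have e: "act d R x = (\<lambda>i. \<Sum>j=1..d. R i j * v j, \<lambda>i k. \<Sum>j=1..d. \<Sum>l=1..d. R i j * M j l * R k l)"
    unfolding act_def xv by (simp only: prod.case)
  have dd: "d - 1 = Suc (d - 2)" using d by simp
  have "Lcond d (d - 1) (act d R x)"
    unfolding Lcond_def
  proof (intro conjI ballI allI impI)
    show "act d R x \<in> Vsp d" by (rule act_Vsp[OF RO x])
  next
    fix a assume a: "a \<in> {1..d - 1}"
    have "fst (act d R x) a = (\<Sum>j=1..d. R a j * v j)" unfolding e by simp
    also have "\<dots> = (\<Sum>j=1..d. rr d x (d + 1 - a) j * rr d x 1 j) / s (d + 1 - a)"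
    proof -
      have ad: "a \<le> d" "1 \<le> a" using a by auto
      show ?thesis unfolding vv R_def Red_def s_def using ad by (simp add: sum_divide_distrib)
    qed
    finally have "fst (act d R x) a = (\<Sum>j=1..d. rr d x (d + 1 - a) j * rr d x 1 j) / s (d + 1 - a)" .
    also have "\<dots> = 0" using dotp_orth[of "d + 1 - a" 1 d x] a unfolding dotp_def by auto
    finally show "fst (act d R x) a = 0" .
  next
    fix a b assume ab: "1 \<le> a" "a + 2 \<le> b" "b \<le> d" "d + 2 \<le> b + (d - 1)"
    define k where "k = d + 1 - a"
    define k' where "k' = d + 1 - b"
    have kk: "k' + 2 \<le> k" "1 \<le> k'" "k \<le> d" unfolding k_def k'_def using ab by auto
    obtain j0 where j0: "k' = Suc j0" using kk by (cases k') auto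
    have "snd (act d R x) a b = (\<Sum>j=1..d. \<Sum>l=1..d. R a j * M j l * R b l)" unfolding e by simp
    also have "\<dots> = (\<Sum>j=1..d. \<Sum>l=1..d. (rr d x k j * (Mget x j l * rr d x k' l)) / (s k * s k'))"
      unfolding R_def Red_def s_def k_def k'_def MM using ab
      by (intro sum.cong refl) auto
    finally have "snd (act d R x) a b = (\<Sum>j=1..d. \<Sum>l=1..d. (rr d x k j * (Mget x j l * rr d x k' l)) / (s k * s k'))" .
    also have "\<dots> = dotp d (rr d x k) (Mv d x (rr d x k')) / (s k * s k')"
      unfolding dotp_def Mv_def by (simp add: sum_divide_distrib sum_distrib_left)
    also have "\<dots> = 0"
    proof -
      have ccn: "cc d x k' \<noteq> 0" using cc_nz[OF nz, of j0] j0 kk by simp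
      have rk: "rr d x (Suc k') = (\<lambda>i. cc d x k' * Mv d x (rr d x k') i + nn d x k' * rr d x j0 i)"
        using rr_SS[of d x j0] j0 by simp
      have "cc d x k' * dotp d (rr d x k) (Mv d x (rr d x k')) = dotp d (rr d x k) (\<lambda>i. cc d x k' * Mv d x (rr d x k') i)"
        using dotp_scale[of d "cc d x k'" "Mv d x (rr d x k')" "rr d x k"] dotp_comm by metis
      also have "\<dots> = dotp d (rr d x k) (\<lambda>i. 1 * rr d x (Suc k') i + (- nn d x k') * rr d x j0 i)"
        unfolding rk by (simp add: algebra_simps)
      also have "\<dots> = dotp d (rr d x k) (rr d x (Suc k')) - nn d x k' * dotp d (rr d x k) (rr d x j0)"
        by (simp only: dotp_lin_r) simp
      also have "\<dots> = 0" using dotp_orth[of k "Suc k'" d x] dotp_orth[of k j0 d x] kk j0 by simp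
      finally show ?thesis using ccn by simp
    qed
    finally show "snd (act d R x) a b = 0" .
  qed
  moreover have "Lset d (d - 1) = {x. Lcond d (d - 1) x}" by (rule Lset_char2) (use d in auto)
  ultimately show ?thesis unfolding R_def by simp
qed

lemma pf_act:
  assumes A: "A \<in> Orth d UNIV"
  shows "poly_fun d UNIV p \<Longrightarrow> \<exists>p'. poly_fun d UNIV p' \<and> (\<forall>y\<in>Vsp d. p' y = p (act d A y))"
proof (induction rule: poly_fun.induct)
  case (const c) then show ?case by (intro exI[of _ "\<lambda>x. c"]) (auto intro: poly_fun.intros)
next
  case (coord_v i)
  have "poly_fun d UNIV (\<lambda>y. \<Sum>j=1..d. A i j * fst y j)"
    by (auto intro!: pf_sum poly_fun.mult poly_fun.const poly_fun.coord_v)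
  moreover have "\<forall>y\<in>Vsp d. (\<Sum>j=1..d. A i j * fst y j) = fst (act d A y) i"
    unfolding act_def by (auto split: prod.split)
  ultimately show ?case by blast
next
  case (coord_M i j)
  have "poly_fun d UNIV (\<lambda>y. \<Sum>a=1..d. \<Sum>b=1..d. A i a * Mget y a b * A j b)"
    by (auto intro!: pf_sum poly_fun.mult poly_fun.const pf_Mget)
  moreover have "\<forall>y\<in>Vsp d. (\<Sum>a=1..d. \<Sum>b=1..d. A i a * Mget y a b * A j b) = snd (act d A y) i j"
    unfolding act_def by (auto split: prod.split simp: Mget_Vsp)
  ultimately show ?case by blast
next
  case (add p q)
  then obtain p' q' where "poly_fun d UNIV p'" "\<forall>y\<in>Vsp d. p' y = p (act d A y)"
      "poly_fun d UNIV q'" "\<forall>y\<in>Vsp d. q' y = q (act d A y)" by blast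
  then show ?case by (intro exI[of _ "\<lambda>y. p' y + q' y"]) (auto intro: poly_fun.add)
next
  case (mult p q)
  then obtain p' q' where "poly_fun d UNIV p'" "\<forall>y\<in>Vsp d. p' y = p (act d A y)"
      "poly_fun d UNIV q'" "\<forall>y\<in>Vsp d. q' y = q (act d A y)" by blast
  then show ?case by (intro exI[of _ "\<lambda>y. p' y * q' y"]) (auto intro: poly_fun.mult)
qed

lemma ratfun_inv_half:
  assumes P: "poly_fun d UNIV P" and Q: "poly_fun d UNIV Q" and y0: "y0 \<in> Vsp d" "Q y0 \<noteq> 0"
    and Pinv: "\<forall>A\<in>Orth d UNIV. \<forall>y\<in>Vsp d. P (act d A y) = P y"
    and Qinv: "\<forall>A\<in>Orth d UNIV. \<forall>y\<in>Vsp d. Q (act d A y) = Q y"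
    and C: "C \<in> Orth d UNIV" and z: "z \<in> Vsp d" and dom: "ratfun_of d P Q z \<noteq> None"
  shows "ratfun_of d P Q (act d C z) = ratfun_of d P Q z"
proof -
  obtain P1 Q1 where r: "poly_fun d UNIV P1" "poly_fun d UNIV Q1"
      "\<forall>y\<in>Vsp d. P y * Q1 y = P1 y * Q y" "Q1 z \<noteq> 0"
    using ratfun_dom[OF dom] by blast
  define D where "D = (\<lambda>i j. C j i)"
  have DO: "D \<in> Orth d UNIV" unfolding D_def by (rule Orth_T[OF C])
  obtain P2 where P2: "poly_fun d UNIV P2" "\<forall>y\<in>Vsp d. P2 y = P1 (act d D y)" using pf_act[OF DO r(1)] by blast
  obtain Q2 where Q2: "poly_fun d UNIV Q2" "\<forall>y\<in>Vsp d. Q2 y = Q1 (act d D y)" using pf_act[OF DO r(2)] by blast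
  have Cz: "act d C z \<in> Vsp d" by (rule act_Vsp[OF C z])
  have bk: "act d D (act d C z) = z" unfolding D_def by (rule act_inv[OF C z])
  have rep: "\<forall>y\<in>Vsp d. P y * Q2 y = P2 y * Q y"
  proof
    fix y assume y: "y \<in> Vsp d"
    have Dy: "act d D y \<in> Vsp d" by (rule act_Vsp[OF DO y])
    have "P y * Q2 y = P (act d D y) * Q1 (act d D y)" using Q2 y Pinv DO by simp
    also have "\<dots> = P1 (act d D y) * Q (act d D y)" using r(3) Dy by simp
    also have "\<dots> = P2 y * Q y" using P2 y Qinv DO by simp
    finally show "P y * Q2 y = P2 y * Q y" .
  qed
  have "ratfun_of d P Q (act d C z) = Some (P2 (act d C z) / Q2 (act d C z))"
    by (rule ratfun_some[OF Q y0 P2(1) Q2(1) rep Cz]) (use Q2 Cz bk r in simp)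
  also have "\<dots> = Some (P1 z / Q1 z)" using P2 Q2 Cz bk by simp
  also have "\<dots> = ratfun_of d P Q z" using ratfun_some[OF Q y0 r(1,2,3) z r(4)] by simp
  finally show ?thesis .
qed

lemma ratfun_inv:
  assumes P: "poly_fun d UNIV P" and Q: "poly_fun d UNIV Q" and y0: "y0 \<in> Vsp d" "Q y0 \<noteq> 0"
    and Pinv: "\<And>A y. A \<in> Orth d UNIV \<Longrightarrow> y \<in> Vsp d \<Longrightarrow> P (act d A y) = P y"
    and Qinv: "\<And>A y. A \<in> Orth d UNIV \<Longrightarrow> y \<in> Vsp d \<Longrightarrow> Q (act d A y) = Q y"
  shows "invariant d UNIV (ratfun_of d P Q)"
  unfolding invariant_def
proof (intro ballI)
  fix A x assume A: "A \<in> Orth d UNIV" and x: "x \<in> Vsp d"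
  have Pi: "\<forall>A\<in>Orth d UNIV. \<forall>y\<in>Vsp d. P (act d A y) = P y" using Pinv by blast
  have Qi: "\<forall>A\<in>Orth d UNIV. \<forall>y\<in>Vsp d. Q (act d A y) = Q y" using Qinv by blast
  note half = ratfun_inv_half[OF P Q y0 Pi Qi]
  show "ratfun_of d P Q (act d A x) = ratfun_of d P Q x"
  proof (cases "ratfun_of d P Q x = None")
    case False then show ?thesis using half[OF A x] by blast
  next
    case True
    show ?thesis
    proof (cases "ratfun_of d P Q (act d A x) = None")
      case True2: True then show ?thesis using True by simp
    next
      case False
      have AT: "(\<lambda>i j. A j i) \<in> Orth d UNIV" by (rule Orth_T[OF A])
      have "ratfun_of d P Q (act d (\<lambda>i j. A j i) (act d A x)) = ratfun_of d P Q (act d A x)"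
        by (rule half[OF AT act_Vsp[OF A x] False])
      then show ?thesis using act_inv[OF A x] by simp
    qed
  qed
qed

section \<open>The invariants f_i\<close>

definition Fq :: "nat \<Rightarrow> nat \<Rightarrow> pt \<Rightarrow> complex" where
  "Fq d i = (\<lambda>x. nn d x (i - 1) * (cc d x (i - 1))^2)"

definition Fr :: "nat \<Rightarrow> nat \<Rightarrow> pt \<Rightarrow> complex option" where
  "Fr d i = ratfun_of d (\<lambda>x. nn d x i) (Fq d i)"

lemma pf_Fq: "poly_fun d \<real> (Fq d i)"
  unfolding Fq_def by (auto intro!: poly_fun.mult pf_pow pf_nn pf_cc)

lemma Fq_nz: assumes "2 \<le> i" "i \<le> d" "\<forall>k\<in>{1..i - 1}. nn d x k \<noteq> 0" shows "Fq d i x \<noteq> 0"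
proof -
  have e: "i - 1 = Suc (i - 2)" using assms by simp
  have "cc d x (i - 1) \<noteq> 0" unfolding e cc_prod using assms by auto
  moreover have "nn d x (i - 1) \<noteq> 0" using assms by auto
  ultimately show ?thesis unfolding Fq_def by simp
qed

lemma Fq_act: assumes A: "A \<in> Orth d K" and y: "y \<in> Vsp d" and i: "2 \<le> i" shows "Fq d i (act d A y) = Fq d i y"
proof -
  have e: "i - 1 = Suc (i - 2)" using i by simp
  show ?thesis unfolding Fq_def e using nn_act[OF A y] cc_act[OF A y] by simp
qed

lemma pf_hfun: assumes "1 \<le> i" "i \<le> d" shows "poly_fun d \<real> (hfun d i)"
proof (cases "i = 1")
  case True
  have "hfun d i = (\<lambda>x. \<Sum>j=1..d. (fst x j)^2)" using True unfolding hfun_def by simp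
  then show ?thesis by (auto intro!: pf_sum pf_pow poly_fun.coord_v)
next
  case False
  have eq: "hfun d i = (\<lambda>x. \<Sum>k=1..d-i+1. (snd x k (d-i+2))^2)" using False unfolding hfun_def by simp
  show ?thesis unfolding eq
  proof (rule pf_sum)
    show "(0::complex) \<in> \<real>" by simp
    show "finite {1..d-i+1}" by simp
  next
    fix a assume a: "a \<in> {1..d-i+1}"
    have "poly_fun d \<real> (\<lambda>x. snd x a (d-i+2))" by (rule poly_fun.coord_M) (use a assms False in auto)
    then show "poly_fun d \<real> (\<lambda>x. (snd x a (d-i+2))^2)" by (rule pf_pow[rotated]) simp
  qed
qed

lemma hfun1: "hfun d 1 = (\<lambda>x. nn d x 1)"
  unfolding hfun_def nn_def dotp_def using rr_1 by (simp add: power2_eq_square)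

lemma nn_L2: assumes "2 \<le> i" "i \<le> d" "Lcond d (i - 1) y" shows "nn d y i = hfun d i y * Fq d i y"
proof -
  obtain k where k: "i = k + 2" using assms by (metis add.commute le_Suc_ex add_2_eq_Suc)
  show ?thesis using nn_L[of d k y] assms k unfolding Fq_def by simp
qed

lemma finv_eq:
  assumes d: "2 \<le> d" and i: "2 \<le> i" "i \<le> d"
  shows "finv d i = Fr d i"
proof -
  have i1: "i \<noteq> 1" using i by simp
  have Lc: "Lset d (i - 1) = {x. Lcond d (i - 1) x}" by (rule Lset_char2) (use i in auto)
  have x0V: "x0 d \<in> Vsp d" using x0_Vsp d by simp
  have x0nz: "\<forall>k\<in>{1..d}. nn d (x0 d) k \<noteq> 0" using x0_nn[OF d] by blast
  have Fqx0: "Fq d i (x0 d) \<noteq> 0" by (rule Fq_nz) (use i x0nz in auto)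
  have PnU: "poly_fun d UNIV (\<lambda>x. nn d x i)" by (rule pf_mono[OF pf_nn]) simp
  have FqU: "poly_fun d UNIV (Fq d i)" by (rule pf_mono[OF pf_Fq]) simp
  have hU: "poly_fun d UNIV (hfun d i)" by (rule pf_mono[OF pf_hfun]) (use i in auto)
  have x0L: "Lcond d (i - 1) (x0 d)" using x0_L d by simp
  have Linv: "Lcond d (d - 1) z \<Longrightarrow> Lcond d (i - 1) z" for z using Lcond_mono i by simp
  define \<Phi> where "\<Phi> = (\<lambda>g. is_ratfun d UNIV g \<and> invariant d UNIV g
            \<and> (\<exists>x\<in>Lset d (i-1). g x \<noteq> None)
            \<and> (\<forall>x\<in>Lset d (i-1). g x \<noteq> None \<longrightarrow> g x = Some (hfun d i x)))"
  have "\<Phi> (Fr d i)"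
    unfolding \<Phi>_def
  proof (intro conjI)
    show "is_ratfun d UNIV (Fr d i)" unfolding is_ratfun_def Fr_def using PnU FqU x0V Fqx0 by blast
    show "invariant d UNIV (Fr d i)" unfolding Fr_def
      by (rule ratfun_inv[OF PnU FqU x0V Fqx0]) (use nn_act Fq_act i in auto)
    show "\<exists>x\<in>Lset d (i-1). Fr d i x \<noteq> None"
    proof (rule bexI[of _ "x0 d"])
      show "Fr d i (x0 d) \<noteq> None" using ratfun_direct[OF PnU FqU x0V Fqx0] unfolding Fr_def by simp
      show "x0 d \<in> Lset d (i - 1)" using x0L Lc by simp
    qed
    show "\<forall>x\<in>Lset d (i-1). Fr d i x \<noteq> None \<longrightarrow> Fr d i x = Some (hfun d i x)"
    proof (intro ballI impI)
      fix x assume xL: "x \<in> Lset d (i-1)" and dom: "Fr d i x \<noteq> None"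
      obtain P1 Q1 where xV: "x \<in> Vsp d" and r: "poly_fun d UNIV P1" "poly_fun d UNIV Q1"
          "\<forall>y\<in>Vsp d. nn d y i * Q1 y = P1 y * Fq d i y" "Q1 x \<noteq> 0"
        using ratfun_dom[OF dom[unfolded Fr_def]] by blast
      have val: "Fr d i x = Some (P1 x / Q1 x)"
        unfolding Fr_def by (rule ratfun_some[OF FqU x0V Fqx0 r(1,2,3) xV r(4)])
      have pf: "poly_fun d UNIV (\<lambda>y. hfun d i y * Q1 y - P1 y)"
        using hU r by (auto intro!: pf_diff poly_fun.mult)
      have "hfun d i x * Q1 x - P1 x = 0"
      proof (rule integral_dom[OF Lcond_line_closed pf FqU])
        fix y assume y: "y \<in> {x. Lcond d (i - 1) x}"
        then have yV: "y \<in> Vsp d" unfolding Lcond_def by simp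
        have "(hfun d i y * Q1 y - P1 y) * Fq d i y = nn d y i * Q1 y - P1 y * Fq d i y"
          using nn_L2[of i d y] i y by (simp add: algebra_simps)
        then show "(hfun d i y * Q1 y - P1 y) * Fq d i y = 0" using r(3) yV by simp
      qed (use x0L Fqx0 xL Lc in auto)
      then show "Fr d i x = Some (hfun d i x)" using val r(4) by (simp add: field_simps)
    qed
  qed
  moreover have "g = Fr d i" if g: "\<Phi> g" for g
  proof -
    obtain P' Q' where gr: "poly_fun d UNIV P'" "poly_fun d UNIV Q'" "\<exists>x\<in>Vsp d. Q' x \<noteq> 0"
        "g = ratfun_of d P' Q'"
      using g unfolding \<Phi>_def is_ratfun_def by blast
    obtain y1 where y1: "y1 \<in> Vsp d" "Q' y1 \<noteq> 0" using gr(3) by blast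
    have ginv: "invariant d UNIV g" using g unfolding \<Phi>_def by blast
    have gL: "\<forall>x\<in>Lset d (i-1). g x \<noteq> None \<longrightarrow> g x = Some (hfun d i x)" using g unfolding \<Phi>_def by blast
    define N where "N = (\<lambda>y. \<Prod>k=1..d. nn d y k)"
    have NU: "poly_fun d UNIV N" unfolding N_def by (auto intro!: pf_prod pf_mono[OF pf_nn])
    have Nx0: "N (x0 d) \<noteq> 0" unfolding N_def using x0nz by simp
    define R where "R = (\<lambda>y. P' y * Fq d i y - nn d y i * Q' y)"
    have RU: "poly_fun d UNIV R" unfolding R_def using gr PnU FqU by (auto intro!: pf_diff poly_fun.mult)
    have key: "R y * Q' y * N y = 0" if y: "y \<in> Vsp d" for y
    proof (cases "Q' y = 0 \<or> N y = 0")
      case True then show ?thesis by auto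
    next
      case False
      then have nz: "\<forall>k\<in>{1..d}. nn d y k \<noteq> 0" and Qy: "Q' y \<noteq> 0" unfolding N_def by auto
      have gy: "g y = Some (P' y / Q' y)" unfolding gr(4) by (rule ratfun_direct[OF gr(1,2) y Qy])
      define z where "z = act d (Red d y) y"
      have RO: "Red d y \<in> Orth d UNIV" by (rule Red_Orth[OF nz])
      have zL: "z \<in> Lset d (d - 1)" unfolding z_def by (rule act_Red_L[OF d y nz])
      have "Lset d (d - 1) = {x. Lcond d (d - 1) x}" by (rule Lset_char2) (use d in auto)
      then have zLc: "Lcond d (d - 1) z" using zL by simp
      have zL2: "z \<in> Lset d (i - 1)" using Linv[OF zLc] Lc by simp
      have gz: "g z = g y" unfolding z_def using ginv RO y unfolding invariant_def by blast
      then have "g z = Some (hfun d i z)" using gL zL2 gy by auto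
      then have h: "P' y / Q' y = hfun d i z" using gz gy by simp
      have "nn d z i = hfun d i z * Fq d i z" by (rule nn_L2) (use i Linv zLc in auto)
      moreover have "nn d z i = nn d y i" unfolding z_def by (rule nn_act[OF RO y])
      moreover have "Fq d i z = Fq d i y" unfolding z_def by (rule Fq_act[OF RO y i(1)])
      ultimately have "nn d y i = P' y / Q' y * Fq d i y" using h by simp
      then have "R y = 0" unfolding R_def using Qy by (simp add: field_simps)
      then show ?thesis by simp
    qed
    have RQ: "R y * Q' y = 0" if y: "y \<in> Vsp d" for y
    proof (rule integral_dom[OF Vsp_line_closed _ NU _ x0V Nx0 y])
      show "poly_fun d UNIV (\<lambda>y. R y * Q' y)" using RU gr by (auto intro: poly_fun.mult)
      show "\<And>y. y \<in> Vsp d \<Longrightarrow> R y * Q' y * N y = 0" using key by blast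
    qed
    have R0: "R y = 0" if y: "y \<in> Vsp d" for y
      by (rule integral_dom[OF Vsp_line_closed RU gr(2) _ y1 y]) (use RQ in blast)
    have "ratfun_of d (\<lambda>x. nn d x i) (Fq d i) = ratfun_of d P' Q'"
      by (rule ratfun_cong[OF gr(1,2) PnU FqU y1 x0V Fqx0]) (use R0 in \<open>auto simp: R_def\<close>)
    then show ?thesis unfolding Fr_def gr(4) by simp
  qed
  ultimately have "(THE g. \<Phi> g) = Fr d i" by (rule the_equality)
  then show ?thesis unfolding finv_def \<Phi>_def using i1 by simp
qed

lemma finv1: "finv d 1 = ratfun_of d (\<lambda>x. nn d x 1) (\<lambda>_. 1)"
  unfolding finv_def hfun1 by simp

lemma inv_mono: "invariant d UNIV g \<Longrightarrow> invariant d \<real> g"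
  unfolding invariant_def using Orth_mono by blast

lemma finv_val:
  assumes d: "2 \<le> d" and k: "k \<in> {1..d}" and x: "x \<in> Vsp d" and nz: "\<forall>l\<in>{1..k-1}. nn d x l \<noteq> 0"
  shows "finv d k x = Some (if k = 1 then nn d x 1 else nn d x k / Fq d k x)"
proof (cases "k = 1")
  case True
  have "ratfun_of d (\<lambda>x. nn d x 1) (\<lambda>_. 1) x = Some (nn d x 1 / 1)"
    by (rule ratfun_direct[OF pf_mono[OF pf_nn] poly_fun.const x]) auto
  then show ?thesis using True finv1 by simp
next
  case False
  then have k2: "2 \<le> k" "k \<le> d" using k by auto
  have "Fr d k x = Some (nn d x k / Fq d k x)"
    unfolding Fr_def by (rule ratfun_direct[OF pf_mono[OF pf_nn] pf_mono[OF pf_Fq] x Fq_nz]) (use k2 nz in auto)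
  then show ?thesis using finv_eq[OF d k2] False by simp
qed

lemma U_C_char:
  assumes d: "2 \<le> d"
  shows "U_C d = {x \<in> Vsp d. \<forall>k\<in>{1..d}. nn d x k \<noteq> 0}"
proof (intro Set.set_eqI iffI)
  fix x assume xU: "x \<in> U_C d"
  then have x: "x \<in> Vsp d" and pr: "(\<Prod>k=1..d. the (finv d k x)) \<noteq> 0" unfolding U_C_def by auto
  have th: "\<forall>k\<in>{1..d}. the (finv d k x) \<noteq> 0" using pr by auto
  have "k \<le> d \<Longrightarrow> \<forall>l\<in>{1..k}. nn d x l \<noteq> 0" for k
  proof (induction k)
    case 0 then show ?case by simp
  next
    case (Suc k)
    have IH: "\<forall>l\<in>{1..Suc k - 1}. nn d x l \<noteq> 0" using Suc by auto
    have v: "finv d (Suc k) x = Some (if Suc k = 1 then nn d x 1 else nn d x (Suc k) / Fq d (Suc k) x)"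
      by (rule finv_val[OF d _ x IH]) (use Suc in auto)
    have "the (finv d (Suc k) x) \<noteq> 0" using th Suc by auto
    then have "nn d x (Suc k) \<noteq> 0" using v by (auto split: if_splits)
    then show ?case using IH by (auto simp: le_Suc_eq)
  qed
  then show "x \<in> {x \<in> Vsp d. \<forall>k\<in>{1..d}. nn d x k \<noteq> 0}" using x by auto
next
  fix x assume "x \<in> {x \<in> Vsp d. \<forall>k\<in>{1..d}. nn d x k \<noteq> 0}"
  then have x: "x \<in> Vsp d" and nz: "\<forall>k\<in>{1..d}. nn d x k \<noteq> 0" by auto
  have v: "finv d k x = Some (if k = 1 then nn d x 1 else nn d x k / Fq d k x)" if k: "k \<in> {1..d}" for k
    by (rule finv_val[OF d k x]) (use nz k in auto)
  have nzv: "(if k = 1 then nn d x 1 else nn d x k / Fq d k x) \<noteq> 0" if k: "k \<in> {1..d}" for k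
  proof (cases "k = 1")
    case True then show ?thesis using nz k by simp
  next
    case False
    have "Fq d k x \<noteq> 0" by (rule Fq_nz) (use False k nz in auto)
    then show ?thesis using False nz k by simp
  qed
  have "(\<Prod>k=1..d. the (finv d k x)) \<noteq> 0" using v nzv by simp
  then show "x \<in> U_C d" unfolding U_C_def using x v by auto
qed

lemma U_R_char: "2 \<le> d \<Longrightarrow> U_R d = {x \<in> VR d. \<forall>k\<in>{1..d}. nn d x k \<noteq> 0}"
  unfolding U_R_def using U_C_char VR_char by auto

theorem proposition3p12:
  fixes d :: nat
  assumes "2 \<le> d"
  shows "(\<forall>i\<in>{1..d}. is_ratfun d \<real> (finv d i) \<and> invariant d \<real> (finv d i))
    \<and> U_R d = {x \<in> VR d. (\<forall>k\<in>{1..d}. \<exists>P Q. poly_fun d \<real> P \<and> poly_fun d \<real> Q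
                              \<and> Q x \<noteq> 0 \<and> finv d k = ratfun_of d P Q)
                        \<and> (\<Prod>k=1..d. the (finv d k x)) \<noteq> 0}
    \<and> (\<forall>A\<in>Orth d \<real>. \<forall>x\<in>U_R d. act d A x \<in> U_R d)
    \<and> U_R d \<noteq> {}
    \<and> zariski_open_R d (U_R d)
    \<and> (\<forall>x\<in>U_R d. \<exists>A\<in>Orth d \<real>. act d A x \<in> Lset d (d - 1) \<inter> VR d)"
proof -
  have d: "2 \<le> d" by (rule assms)
  have x0V: "x0 d \<in> Vsp d" using x0_Vsp d by simp
  have x0R: "x0 d \<in> VR d" using x0_VR d by simp
  have x0nz: "\<forall>k\<in>{1..d}. nn d (x0 d) k \<noteq> 0" using x0_nn[OF d] by blast
  have URc: "U_R d = {x \<in> VR d. \<forall>k\<in>{1..d}. nn d x k \<noteq> 0}" by (rule U_R_char[OF d])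
  have one: "poly_fun d \<real> (\<lambda>_. 1)" by (rule poly_fun.const) simp
  have rep: "\<exists>P Q. poly_fun d \<real> P \<and> poly_fun d \<real> Q \<and> finv d k = ratfun_of d P Q
              \<and> (\<forall>x. x \<in> Vsp d \<longrightarrow> (\<forall>l\<in>{1..d}. nn d x l \<noteq> 0) \<longrightarrow> Q x \<noteq> 0)
              \<and> invariant d UNIV (finv d k)" if k: "k \<in> {1..d}" for k
  proof (cases "k = 1")
    case True
    have inv: "invariant d UNIV (ratfun_of d (\<lambda>x. nn d x 1) (\<lambda>_. 1))"
      by (rule ratfun_inv[OF pf_mono[OF pf_nn] pf_mono[OF one] x0V]) (use nn_act in auto)
    show ?thesis using True finv1 pf_nn one inv by (intro exI[of _ "\<lambda>x. nn d x 1"] exI[of _ "\<lambda>_. 1"]) auto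
  next
    case False
    then have k2: "2 \<le> k" "k \<le> d" using k by auto
    have Fqx0: "Fq d k (x0 d) \<noteq> 0" by (rule Fq_nz) (use k2 x0nz in auto)
    have inv: "invariant d UNIV (Fr d k)" unfolding Fr_def
      by (rule ratfun_inv[OF pf_mono[OF pf_nn] pf_mono[OF pf_Fq] x0V Fqx0]) (use nn_act Fq_act k2 in auto)
    have "\<forall>x. x \<in> Vsp d \<longrightarrow> (\<forall>l\<in>{1..d}. nn d x l \<noteq> 0) \<longrightarrow> Fq d k x \<noteq> 0"
    proof (intro allI impI)
      fix x assume "x \<in> Vsp d" "\<forall>l\<in>{1..d}. nn d x l \<noteq> 0"
      then show "Fq d k x \<noteq> 0" by (intro Fq_nz) (use k2 in auto)
    qed
    then show ?thesis using finv_eq[OF d k2] pf_nn pf_Fq inv unfolding Fr_def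
      by (intro exI[of _ "\<lambda>x. nn d x k"] exI[of _ "Fq d k"]) auto
  qed
  have c1: "\<forall>i\<in>{1..d}. is_ratfun d \<real> (finv d i) \<and> invariant d \<real> (finv d i)"
  proof
    fix i assume i: "i \<in> {1..d}"
    obtain P Q where PQ: "poly_fun d \<real> P" "poly_fun d \<real> Q" "finv d i = ratfun_of d P Q"
        "\<forall>x. x \<in> Vsp d \<longrightarrow> (\<forall>l\<in>{1..d}. nn d x l \<noteq> 0) \<longrightarrow> Q x \<noteq> 0" "invariant d UNIV (finv d i)"
      using rep[OF i] by blast
    have "Q (x0 d) \<noteq> 0" using PQ(4) x0V x0nz by blast
    then have "is_ratfun d \<real> (finv d i)" unfolding is_ratfun_def using PQ x0V by blast
    then show "is_ratfun d \<real> (finv d i) \<and> invariant d \<real> (finv d i)" using inv_mono PQ(5) by blast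
  qed
  have c2: "U_R d = {x \<in> VR d. (\<forall>k\<in>{1..d}. \<exists>P Q. poly_fun d \<real> P \<and> poly_fun d \<real> Q
                              \<and> Q x \<noteq> 0 \<and> finv d k = ratfun_of d P Q)
                        \<and> (\<Prod>k=1..d. the (finv d k x)) \<noteq> 0}"
  proof (intro Set.set_eqI iffI)
    fix x assume xU: "x \<in> U_R d"
    then have xR: "x \<in> VR d" and nz: "\<forall>k\<in>{1..d}. nn d x k \<noteq> 0" using URc by auto
    have xV: "x \<in> Vsp d" using xR VR_char by blast
    have pr: "(\<Prod>k=1..d. the (finv d k x)) \<noteq> 0" using xU unfolding U_R_def U_C_def by auto
    have "\<forall>k\<in>{1..d}. \<exists>P Q. poly_fun d \<real> P \<and> poly_fun d \<real> Q \<and> Q x \<noteq> 0 \<and> finv d k = ratfun_of d P Q"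
    proof
      fix k assume k: "k \<in> {1..d}"
      obtain P Q where PQ: "poly_fun d \<real> P" "poly_fun d \<real> Q" "finv d k = ratfun_of d P Q"
          "\<forall>x. x \<in> Vsp d \<longrightarrow> (\<forall>l\<in>{1..d}. nn d x l \<noteq> 0) \<longrightarrow> Q x \<noteq> 0"
        using rep[OF k] by blast
      then show "\<exists>P Q. poly_fun d \<real> P \<and> poly_fun d \<real> Q \<and> Q x \<noteq> 0 \<and> finv d k = ratfun_of d P Q"
        using xV nz by blast
    qed
    then show "x \<in> {x \<in> VR d. (\<forall>k\<in>{1..d}. \<exists>P Q. poly_fun d \<real> P \<and> poly_fun d \<real> Q
                              \<and> Q x \<noteq> 0 \<and> finv d k = ratfun_of d P Q)
                        \<and> (\<Prod>k=1..d. the (finv d k x)) \<noteq> 0}" using xR pr by blast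
  next
    fix x assume "x \<in> {x \<in> VR d. (\<forall>k\<in>{1..d}. \<exists>P Q. poly_fun d \<real> P \<and> poly_fun d \<real> Q
                              \<and> Q x \<noteq> 0 \<and> finv d k = ratfun_of d P Q)
                        \<and> (\<Prod>k=1..d. the (finv d k x)) \<noteq> 0}"
    then have xR: "x \<in> VR d" and ex: "\<forall>k\<in>{1..d}. \<exists>P Q. poly_fun d \<real> P \<and> poly_fun d \<real> Q
                              \<and> Q x \<noteq> 0 \<and> finv d k = ratfun_of d P Q"
        and pr: "(\<Prod>k=1..d. the (finv d k x)) \<noteq> 0" by auto
    have xV: "x \<in> Vsp d" using xR VR_char by blast
    have "\<forall>k\<in>{1..d}. finv d k x \<noteq> None"
    proof
      fix k assume k: "k \<in> {1..d}"
      obtain P Q where PQ: "poly_fun d \<real> P" "poly_fun d \<real> Q" "Q x \<noteq> 0" "finv d k = ratfun_of d P Q"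
        using ex k by blast
      show "finv d k x \<noteq> None" using ratfun_direct[OF pf_mono[OF PQ(1)] pf_mono[OF PQ(2)] xV PQ(3)] PQ(4) by simp
    qed
    then show "x \<in> U_R d" unfolding U_R_def U_C_def using xR xV pr by blast
  qed
  have c3: "\<forall>A\<in>Orth d \<real>. \<forall>x\<in>U_R d. act d A x \<in> U_R d"
  proof (intro ballI)
    fix A x assume A: "A \<in> Orth d \<real>" and x: "x \<in> U_R d"
    have xR: "x \<in> VR d" and nz: "\<forall>k\<in>{1..d}. nn d x k \<noteq> 0" using x URc by auto
    have xV: "x \<in> Vsp d" using xR VR_char by blast
    show "act d A x \<in> U_R d" unfolding URc using act_VR[OF A xR] nn_act[OF A xV] nz by simp
  qed
  have "x0 d \<in> U_R d" unfolding URc using x0R x0nz by simp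
  then have c4: "U_R d \<noteq> {}" by blast
  have c5: "zariski_open_R d (U_R d)"
    unfolding zariski_open_R_def
  proof (intro conjI exI[of _ "{\<lambda>x. \<Prod>k=1..d. nn d x k}"])
    show "U_R d \<subseteq> VR d" using URc by auto
    show "\<forall>p\<in>{\<lambda>x. \<Prod>k=1..d. nn d x k}. poly_fun d \<real> p" by (auto intro!: pf_prod pf_nn)
    show "VR d - U_R d = {x \<in> VR d. \<forall>p\<in>{\<lambda>x. \<Prod>k=1..d. nn d x k}. p x = 0}" using URc by auto
  qed
  have c6: "\<forall>x\<in>U_R d. \<exists>A\<in>Orth d \<real>. act d A x \<in> Lset d (d - 1) \<inter> VR d"
  proof
    fix x assume x: "x \<in> U_R d"
    have xR: "x \<in> VR d" and nz: "\<forall>k\<in>{1..d}. nn d x k \<noteq> 0" using x URc by auto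
    have xV: "x \<in> Vsp d" using xR VR_char by blast
    have RO: "Red d x \<in> Orth d \<real>" by (rule Red_real[OF xR nz])
    show "\<exists>A\<in>Orth d \<real>. act d A x \<in> Lset d (d - 1) \<inter> VR d"
      using RO act_Red_L[OF d xV nz] act_VR[OF RO xR] by blast
  qed
  show ?thesis using c1 c2 c3 c4 c5 c6 by blast
qed

end
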